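(* Let $S\subset\mathbb{R}^p$ be a compact set with $\mathrm{cl}(\mathrm{int}(S))=S$, and let $\mu_S$ be the uniform probability measure on $S$. Let $(\delta_k)_{k\in\mathbb{N}}$ be a decreasing sequence of positive numbers converging to $0$. For every $k$, let $d_k$ be the smallest positive integer such that \[2^{3-\frac{\delta_k d_k}{\delta_k+\mathrm{diam}(S)}}\,d_k^p\left(\frac{e}{p}\right)^p\exp\left(\frac{p^2}{d_k}\right)\le\alpha_k,\qquad\text{where}\quad \alpha_k:=\frac{\delta_k^p\,\omega_p}{\lambda(S)}\,\frac{(d_k+1)(d_k+2)(d_k+3)}{(d_k+p+1)(d_k+p+2)(2d_k+p+6)}.\] For every $k$ let $S_k=\{\mathbf{x}\in\mathbb{R}^p:\ s(d_k)\,\Lambda_{\mu_S,d_k}(\mathbf{x})\ge\alpha_k\}$. Then, as $k\to\infty$, $d_H(S_k,S)\to0$ and $d_H(\partial S_k,\partial S)\to0$.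
   Context: $\lambda$ is Lebesgue measure on $\mathbb{R}^p$, and $\mu_S=\lambda_S/\lambda(S)$ where $\lambda_S$ is the restriction of $\lambda$ to $S$. $\mathrm{diam}(S)$ is the diameter of $S$, $\omega_p=\frac{2\pi^{(p+1)/2}}{\Gamma((p+1)/2)}$, and $s(d)=\binom{p+d}{d}$. For a finite Borel measure $\nu$ on $\mathbb{R}^p$ with finite moments and $d\in\mathbb{N}$, the Christoffel function is $\Lambda_{\nu,d}(\xi)=\min\{\int P^2\,d\nu: P\in\mathbb{R}[X]_d,\ P(\xi)=1\}$, where $\mathbb{R}[X]_d$ is the space of real polynomials in $p$ variables of total degree at most $d$ (equivalently $\Lambda_{\nu,d}(\xi)=(\mathbf{v}_d(\xi)^T\mathbf{M}_d(\nu)^{-1}\mathbf{v}_d(\xi))^{-1}$ when the moment matrix $\mathbf{M}_d(\nu)=\int\mathbf{v}_d\mathbf{v}_d^T d\nu$ of the monomial vector $\mathbf{v}_d$ is invertible). $\partial A$ is the topological boundary of $A$, and $d_H(X,Y)=\max\{\sup_{\mathbf{x}\in X}\inf_{\mathbf{y}\in Y}\|\mathbf{x}-\mathbf{y}\|,\ \sup_{\mathbf{y}\in Y}\inf_{\mathbf{x}\in X}\|\mathbf{x}-\mathbf{y}\|\}$ is the Hausdorff distance. *)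

theory Defs
  imports "HOL-Analysis.Analysis"
begin

definition multi_indices :: "nat \<Rightarrow> ('p::finite \<Rightarrow> nat) set" where
  "multi_indices d = {\<alpha>. sum \<alpha> UNIV \<le> d}"

definition poly_deg_le :: "nat \<Rightarrow> (real^'p::finite \<Rightarrow> real) set" where
  "poly_deg_le d = {P. \<exists>c :: ('p \<Rightarrow> nat) \<Rightarrow> real.
      P = (\<lambda>x. \<Sum>\<alpha>\<in>multi_indices d. c \<alpha> * (\<Prod>i\<in>UNIV. (x $ i) ^ (\<alpha> i)))}"

definition christoffel :: "(real^'p::finite) measure \<Rightarrow> nat \<Rightarrow> real^'p \<Rightarrow> real" where
  "christoffel \<nu> d \<xi> = Inf {(\<integral>x. (P x)\<^sup>2 \<partial>\<nu>) | P. P \<in> poly_deg_le d \<and> P \<xi> = 1}"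

definition mu_S :: "(real^'p::finite) set \<Rightarrow> (real^'p) measure" where
  "mu_S S = uniform_measure lborel S"

definition omega :: "nat \<Rightarrow> real" where
  "omega p = 2 * pi powr ((real p + 1) / 2) / Gamma ((real p + 1) / 2)"

definition sdim :: "nat \<Rightarrow> nat \<Rightarrow> nat" where
  "sdim p d = (p + d) choose d"

definition hausdorff_dist :: "('a::metric_space) set \<Rightarrow> 'a set \<Rightarrow> ereal" where
  "hausdorff_dist X Y = max (SUP x\<in>X. INF y\<in>Y. ereal (dist x y)) (SUP y\<in>Y. INF x\<in>X. ereal (dist x y))"

definition alpha_thr :: "nat \<Rightarrow> real \<Rightarrow> real \<Rightarrow> nat \<Rightarrow> real" where
  "alpha_thr p \<delta> volS d = (\<delta> ^ p * omega p / volS) *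
     ((real d + 1) * (real d + 2) * (real d + 3) /
      ((real d + real p + 1) * (real d + real p + 2) * (2 * real d + real p + 6)))"

definition deg_cond :: "nat \<Rightarrow> real \<Rightarrow> real \<Rightarrow> real \<Rightarrow> nat \<Rightarrow> bool" where
  "deg_cond p \<delta> diamS volS d \<longleftrightarrow>
     2 powr (3 - \<delta> * real d / (\<delta> + diamS)) * real d ^ p * (exp 1 / real p) ^ p
       * exp (real p ^ 2 / real d) \<le> alpha_thr p \<delta> volS d"

end

theory Submission
  imports Defs
begin


definition mono_f :: "('p::finite \<Rightarrow> nat) \<Rightarrow> real^'p \<Rightarrow> real" where
  "mono_f \<alpha> x = (\<Prod>i\<in>UNIV. (x $ i) ^ (\<alpha> i))"

lemma finite_multi_indices: "finite (multi_indices d :: ('p::finite \<Rightarrow> nat) set)"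
proof -
  have "multi_indices d \<subseteq> Pi\<^sub>E (UNIV::'p set) (\<lambda>_. {0..d})"
  proof
    fix \<alpha> :: "'p \<Rightarrow> nat" assume "\<alpha> \<in> multi_indices d"
    then have "sum \<alpha> UNIV \<le> d" by (simp add: multi_indices_def)
    moreover have "\<alpha> i \<le> sum \<alpha> UNIV" for i by (rule member_le_sum) auto
    ultimately have "\<alpha> i \<le> d" for i using le_trans by blast
    then show "\<alpha> \<in> Pi\<^sub>E UNIV (\<lambda>_. {0..d})" by (auto simp: PiE_def extensional_def intro: order_trans)
  qed
  then show ?thesis by (rule finite_subset) (simp add: finite_PiE)
qed

lemma pd_iff: "f \<in> poly_deg_le d \<longleftrightarrow> (\<exists>c. f = (\<lambda>x. \<Sum>\<alpha>\<in>multi_indices d. c \<alpha> * mono_f \<alpha> x))"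
  by (simp add: poly_deg_le_def mono_f_def)

lemma pd_I: "f = (\<lambda>x. \<Sum>\<alpha>\<in>multi_indices d. c \<alpha> * mono_f \<alpha> x) \<Longrightarrow> f \<in> poly_deg_le d"
  unfolding pd_iff by (rule exI)

lemma pd_E: assumes "f \<in> poly_deg_le d" obtains c where "f = (\<lambda>x. \<Sum>\<alpha>\<in>multi_indices d. c \<alpha> * mono_f \<alpha> x)"
  using assms unfolding pd_iff by (elim exE)

lemma pd_mono: assumes "f \<in> poly_deg_le d" "d \<le> e" shows "f \<in> poly_deg_le e"
proof -
  obtain c where f: "f = (\<lambda>x. \<Sum>\<alpha>\<in>multi_indices d. c \<alpha> * mono_f \<alpha> x)" by (rule pd_E[OF assms(1)])
  have sub: "multi_indices d \<subseteq> multi_indices e" using assms(2) by (auto simp: multi_indices_def)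
  have "f = (\<lambda>x. \<Sum>\<alpha>\<in>multi_indices e. (if \<alpha> \<in> multi_indices d then c \<alpha> else 0) * mono_f \<alpha> x)"
  proof
    fix x
    have "(\<Sum>\<alpha>\<in>multi_indices e. (if \<alpha> \<in> multi_indices d then c \<alpha> else 0) * mono_f \<alpha> x)
        = (\<Sum>\<alpha>\<in>multi_indices d. (if \<alpha> \<in> multi_indices d then c \<alpha> else 0) * mono_f \<alpha> x)"
      by (rule sum.mono_neutral_right[OF finite_multi_indices sub]) auto
    then show "f x = (\<Sum>\<alpha>\<in>multi_indices e. (if \<alpha> \<in> multi_indices d then c \<alpha> else 0) * mono_f \<alpha> x)"
      by (simp add: f)
  qed
  then show ?thesis by (rule pd_I)
qed

lemma pd_const: "(\<lambda>_. c) \<in> poly_deg_le d"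
proof -
  have z: "(\<lambda>_. 0::nat) \<in> (multi_indices d :: ('a \<Rightarrow> nat) set)" by (simp add: multi_indices_def)
  have "(\<lambda>_. c) = (\<lambda>x::real^'a. \<Sum>\<alpha>\<in>multi_indices d. (if \<alpha> = (\<lambda>_. 0) then c else 0) * mono_f \<alpha> x)"
  proof
    fix x :: "real^'a"
    have "(\<Sum>\<alpha>\<in>multi_indices d. (if \<alpha> = (\<lambda>_. 0) then c else 0) * mono_f \<alpha> x)
       = (\<Sum>\<alpha>\<in>multi_indices d. (if \<alpha> = (\<lambda>_. 0) then c * mono_f \<alpha> x else 0))"
      by (rule sum.cong) auto
    also have "\<dots> = c * mono_f (\<lambda>_. 0) x" using z by (simp add: finite_multi_indices)
    finally show "c = (\<Sum>\<alpha>\<in>multi_indices d. (if \<alpha> = (\<lambda>_. 0) then c else 0) * mono_f \<alpha> x)"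
      by (simp add: mono_f_def)
  qed
  then show ?thesis by (rule pd_I)
qed

lemma pd_add: assumes "f \<in> poly_deg_le d" "g \<in> poly_deg_le d" shows "(\<lambda>x. f x + g x) \<in> poly_deg_le d"
proof -
  obtain c where f: "f = (\<lambda>x. \<Sum>\<alpha>\<in>multi_indices d. c \<alpha> * mono_f \<alpha> x)" by (rule pd_E[OF assms(1)])
  obtain c' where g: "g = (\<lambda>x. \<Sum>\<alpha>\<in>multi_indices d. c' \<alpha> * mono_f \<alpha> x)" by (rule pd_E[OF assms(2)])
  have "(\<lambda>x. f x + g x) = (\<lambda>x. \<Sum>\<alpha>\<in>multi_indices d. (c \<alpha> + c' \<alpha>) * mono_f \<alpha> x)"
    by (simp add: f g sum.distrib[symmetric] algebra_simps)
  then show ?thesis by (rule pd_I)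
qed

lemma pd_scale: assumes "f \<in> poly_deg_le d" shows "(\<lambda>x. a * f x) \<in> poly_deg_le d"
proof -
  obtain c where f: "f = (\<lambda>x. \<Sum>\<alpha>\<in>multi_indices d. c \<alpha> * mono_f \<alpha> x)" by (rule pd_E[OF assms(1)])
  have "(\<lambda>x. a * f x) = (\<lambda>x. \<Sum>\<alpha>\<in>multi_indices d. (a * c \<alpha>) * mono_f \<alpha> x)"
    by (simp add: f sum_distrib_left algebra_simps)
  then show ?thesis by (rule pd_I)
qed

lemma pd_diff: assumes "f \<in> poly_deg_le d" "g \<in> poly_deg_le d" shows "(\<lambda>x. f x - g x) \<in> poly_deg_le d"
  using pd_add[OF assms(1) pd_scale[OF assms(2), of "-1"]] by simp

lemma pd_sum: assumes "finite I" "\<And>i. i \<in> I \<Longrightarrow> f i \<in> poly_deg_le d"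
  shows "(\<lambda>x. \<Sum>i\<in>I. f i x) \<in> poly_deg_le d"
  using assms
proof (induction I rule: finite_induct)
  case empty then show ?case using pd_const[of 0] by simp
next
  case (insert a F)
  then have "(\<lambda>x. f a x + (\<Sum>i\<in>F. f i x)) \<in> poly_deg_le d" by (intro pd_add) auto
  then show ?case using insert by simp
qed

lemma pd_mulx: assumes "f \<in> poly_deg_le d" shows "(\<lambda>x. x $ i * f x) \<in> poly_deg_le (Suc d)"
proof -
  obtain c where f: "f = (\<lambda>x. \<Sum>\<alpha>\<in>multi_indices d. c \<alpha> * mono_f \<alpha> x)" by (rule pd_E[OF assms(1)])
  define sh :: "('a \<Rightarrow> nat) \<Rightarrow> ('a \<Rightarrow> nat)" where "sh \<alpha> = \<alpha>(i := Suc (\<alpha> i))" for \<alpha>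
  define un :: "('a \<Rightarrow> nat) \<Rightarrow> ('a \<Rightarrow> nat)" where "un \<beta> = \<beta>(i := \<beta> i - 1)" for \<beta>
  have unsh: "un (sh \<alpha>) = \<alpha>" for \<alpha> by (auto simp: un_def sh_def)
  have inj: "inj_on sh (multi_indices d)" by (metis inj_onI unsh)
  have sumsh: "sum (sh \<alpha>) UNIV = Suc (sum \<alpha> UNIV)" for \<alpha>
  proof -
    have "sum (sh \<alpha>) UNIV = sh \<alpha> i + sum (sh \<alpha>) (UNIV - {i})"
      by (simp add: sum.remove)
    also have "sum (sh \<alpha>) (UNIV - {i}) = sum \<alpha> (UNIV - {i})"
      by (rule sum.cong) (auto simp: sh_def)
    also have "sh \<alpha> i + sum \<alpha> (UNIV - {i}) = Suc (\<alpha> i + sum \<alpha> (UNIV - {i}))" by (simp add: sh_def)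
    also have "\<alpha> i + sum \<alpha> (UNIV - {i}) = sum \<alpha> UNIV" by (simp add: sum.remove)
    finally show ?thesis .
  qed
  have sub: "sh ` multi_indices d \<subseteq> multi_indices (Suc d)"
    by (auto simp: multi_indices_def sumsh)
  have monosh: "mono_f (sh \<alpha>) x = x $ i * mono_f \<alpha> x" for \<alpha> and x :: "real^'a"
  proof -
    have "mono_f (sh \<alpha>) x = (x $ i) ^ (sh \<alpha> i) * (\<Prod>j\<in>UNIV - {i}. (x $ j) ^ (sh \<alpha> j))"
      by (simp add: mono_f_def prod.remove)
    also have "(\<Prod>j\<in>UNIV - {i}. (x $ j) ^ (sh \<alpha> j)) = (\<Prod>j\<in>UNIV - {i}. (x $ j) ^ (\<alpha> j))"
      by (rule prod.cong) (auto simp: sh_def)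
    also have "(x $ i) ^ (sh \<alpha> i) * (\<Prod>j\<in>UNIV - {i}. (x $ j) ^ (\<alpha> j)) = x $ i * ((x $ i) ^ (\<alpha> i) * (\<Prod>j\<in>UNIV - {i}. (x $ j) ^ (\<alpha> j)))"
      by (simp add: sh_def)
    also have "(x $ i) ^ (\<alpha> i) * (\<Prod>j\<in>UNIV - {i}. (x $ j) ^ (\<alpha> j)) = mono_f \<alpha> x"
      by (simp add: mono_f_def prod.remove)
    finally show ?thesis .
  qed
  define c' where "c' \<beta> = (if \<beta> \<in> sh ` multi_indices d then c (un \<beta>) else 0)" for \<beta>
  have "(\<lambda>x. x $ i * f x) = (\<lambda>x. \<Sum>\<beta>\<in>multi_indices (Suc d). c' \<beta> * mono_f \<beta> x)"
  proof
    fix x :: "real^'a"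
    have "x $ i * f x = (\<Sum>\<alpha>\<in>multi_indices d. c \<alpha> * mono_f (sh \<alpha>) x)"
      by (simp add: f sum_distrib_left monosh algebra_simps)
    also have "\<dots> = (\<Sum>\<beta>\<in>sh ` multi_indices d. c (un \<beta>) * mono_f \<beta> x)"
      by (subst sum.reindex[OF inj]) (simp add: unsh)
    also have "\<dots> = (\<Sum>\<beta>\<in>sh ` multi_indices d. c' \<beta> * mono_f \<beta> x)"
      by (rule sum.cong) (auto simp: c'_def)
    also have "\<dots> = (\<Sum>\<beta>\<in>multi_indices (Suc d). c' \<beta> * mono_f \<beta> x)"
      by (rule sum.mono_neutral_left[OF finite_multi_indices sub]) (auto simp: c'_def)
    finally show "x $ i * f x = (\<Sum>\<beta>\<in>multi_indices (Suc d). c' \<beta> * mono_f \<beta> x)" .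
  qed
  then show ?thesis by (rule pd_I)
qed

lemma pd_affmul: assumes "f \<in> poly_deg_le d" shows "(\<lambda>x. (x $ i - a) * f x) \<in> poly_deg_le (Suc d)"
proof -
  have "(\<lambda>x. x $ i * f x - a * f x) \<in> poly_deg_le (Suc d)"
    by (intro pd_diff pd_mulx assms pd_scale pd_mono[OF assms]) auto
  then show ?thesis by (simp add: algebra_simps)
qed

lemma pd_continuous: assumes "f \<in> poly_deg_le d" shows "continuous_on A f"
proof -
  obtain c where f: "f = (\<lambda>x. \<Sum>\<alpha>\<in>multi_indices d. c \<alpha> * mono_f \<alpha> x)" by (rule pd_E[OF assms(1)])
  show ?thesis unfolding f mono_f_def by (intro continuous_intros)
qed

definition needleQ :: "real^'p::finite \<Rightarrow> real \<Rightarrow> real^'p \<Rightarrow> real" where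
  "needleQ x R y = 1 - (\<Sum>i\<in>UNIV. (y $ i - x $ i) * (y $ i - x $ i)) / R"

lemma pd_needle_mul: assumes "f \<in> poly_deg_le d"
  shows "(\<lambda>y. needleQ x R y * f y) \<in> poly_deg_le (Suc (Suc d))"
proof -
  have s: "(\<lambda>y. \<Sum>i\<in>UNIV. (y $ i - x $ i) * ((y $ i - x $ i) * f y)) \<in> poly_deg_le (Suc (Suc d))"
    by (intro pd_sum pd_affmul assms) auto
  have "(\<lambda>y. f y - (1/R) * (\<Sum>i\<in>UNIV. (y $ i - x $ i) * ((y $ i - x $ i) * f y))) \<in> poly_deg_le (Suc (Suc d))"
    by (intro pd_diff pd_scale s pd_mono[OF assms]) auto
  moreover have "(\<lambda>y. f y - (1/R) * (\<Sum>i\<in>UNIV. (y $ i - x $ i) * ((y $ i - x $ i) * f y))) = (\<lambda>y. needleQ x R y * f y)"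
  proof
    fix y
    have "(\<Sum>i\<in>UNIV. (y $ i - x $ i) * ((y $ i - x $ i) * f y)) = (\<Sum>i\<in>UNIV. (y $ i - x $ i) * (y $ i - x $ i)) * f y"
      by (simp add: sum_distrib_right mult.assoc)
    then show "f y - (1/R) * (\<Sum>i\<in>UNIV. (y $ i - x $ i) * ((y $ i - x $ i) * f y)) = needleQ x R y * f y"
      by (simp add: needleQ_def algebra_simps)
  qed
  ultimately show ?thesis by simp
qed

lemma pd_needle_pow: "(\<lambda>y. needleQ x R y ^ n) \<in> poly_deg_le (2 * n)"
proof (induction n)
  case 0 then show ?case using pd_const[of 1] by simp
next
  case (Suc n)
  from pd_needle_mul[OF Suc, of x R] show ?case by simp
qed



definition Vsp :: "nat \<Rightarrow> (real \<Rightarrow> real) set" where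
  "Vsp N = {g. \<exists>b. g = (\<lambda>\<theta>. \<Sum>k\<le>N. b k * sin (real k * \<theta>))}"

lemma V_I: "g = (\<lambda>\<theta>. \<Sum>k\<le>N. b k * sin (real k * \<theta>)) \<Longrightarrow> g \<in> Vsp N"
  unfolding Vsp_def by blast

lemma V_E: assumes "g \<in> Vsp N" obtains b where "g = (\<lambda>\<theta>. \<Sum>k\<le>N. b k * sin (real k * \<theta>))"
  using assms unfolding Vsp_def by blast

lemma V_add: assumes "f \<in> Vsp N" "g \<in> Vsp N" shows "(\<lambda>x. f x + g x) \<in> Vsp N"
proof -
  obtain b where b: "f = (\<lambda>\<theta>. \<Sum>k\<le>N. b k * sin (real k * \<theta>))" by (rule V_E[OF assms(1)])
  obtain b' where b': "g = (\<lambda>\<theta>. \<Sum>k\<le>N. b' k * sin (real k * \<theta>))" by (rule V_E[OF assms(2)])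
  show ?thesis
    by (rule V_I[where b="\<lambda>k. b k + b' k"]) (simp add: b b' sum.distrib[symmetric] algebra_simps)
qed

lemma V_scale: assumes "f \<in> Vsp N" shows "(\<lambda>x. a * f x) \<in> Vsp N"
proof -
  obtain b where b: "f = (\<lambda>\<theta>. \<Sum>k\<le>N. b k * sin (real k * \<theta>))" by (rule V_E[OF assms(1)])
  show ?thesis
    by (rule V_I[where b="\<lambda>k. a * b k"]) (simp add: b sum_distrib_left mult.assoc)
qed

lemma V_zero: "(\<lambda>x. 0) \<in> Vsp N"
  by (rule V_I[where b="\<lambda>k. 0"]) simp

lemma V_sum: assumes "finite I" "\<And>i. i \<in> I \<Longrightarrow> f i \<in> Vsp N" shows "(\<lambda>x. \<Sum>i\<in>I. f i x) \<in> Vsp N"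
  using assms
proof (induction I rule: finite_induct)
  case empty then show ?case using V_zero by simp
next
  case (insert a F)
  then have "(\<lambda>x. f a x + (\<Sum>i\<in>F. f i x)) \<in> Vsp N" by (intro V_add) auto
  then show ?case using insert by simp
qed

lemma V_basis: assumes "k \<le> N" shows "(\<lambda>\<theta>. sin (real k * \<theta>)) \<in> Vsp N"
proof (rule V_I[where b="\<lambda>j. if j = k then 1 else 0"])
  have "(\<Sum>j\<le>N. (if j = k then 1 else 0) * sin (real j * \<theta>)) = sin (real k * \<theta>)" for \<theta>
  proof -
    have "(\<Sum>j\<le>N. (if j = k then 1 else 0) * sin (real j * \<theta>)) = (\<Sum>j\<le>N. if j = k then sin (real k * \<theta>) else 0)"
      by (rule sum.cong) auto
    also have "\<dots> = sin (real k * \<theta>)" using assms by simp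
    finally show ?thesis .
  qed
  then show "(\<lambda>\<theta>. sin (real k * \<theta>)) = (\<lambda>\<theta>. \<Sum>j\<le>N. (if j = k then 1 else 0) * sin (real j * \<theta>))"
    by simp
qed

lemma V_mono: assumes "f \<in> Vsp N" "N \<le> M" shows "f \<in> Vsp M"
proof -
  obtain b where b: "f = (\<lambda>\<theta>. \<Sum>k\<le>N. b k * sin (real k * \<theta>))" by (rule V_E[OF assms(1)])
  have "(\<lambda>\<theta>. \<Sum>k\<le>N. b k * sin (real k * \<theta>)) \<in> Vsp M"
    by (intro V_sum V_scale V_basis) (use assms(2) in auto)
  then show ?thesis by (simp add: b)
qed

lemma V_cos_basis: assumes "k \<le> N" shows "(\<lambda>\<theta>. cos \<theta> * sin (real k * \<theta>)) \<in> Vsp (Suc N)"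
proof (cases k)
  case 0 then show ?thesis using V_zero by simp
next
  case (Suc m)
  have eq: "cos \<theta> * sin (real k * \<theta>) = (1/2) * sin (real (Suc k) * \<theta>) + (1/2) * sin (real m * \<theta>)" for \<theta>
  proof -
    have "cos \<theta> * sin (real k * \<theta>) = sin (real k * \<theta>) * cos \<theta>" by simp
    also have "\<dots> = (sin (real k * \<theta> + \<theta>) + sin (real k * \<theta> - \<theta>)) / 2" by (rule sin_times_cos)
    also have "real k * \<theta> + \<theta> = real (Suc k) * \<theta>" by (simp add: algebra_simps)
    also have "real k * \<theta> - \<theta> = real m * \<theta>" using Suc by (simp add: algebra_simps)
    finally show ?thesis by simp
  qed
  have "(\<lambda>\<theta>. (1/2) * sin (real (Suc k) * \<theta>) + (1/2) * sin (real m * \<theta>)) \<in> Vsp (Suc N)"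
    by (intro V_add V_scale V_basis) (use assms Suc in auto)
  then show ?thesis by (simp add: eq)
qed

lemma V_cosmul: assumes "f \<in> Vsp N" shows "(\<lambda>\<theta>. cos \<theta> * f \<theta>) \<in> Vsp (Suc N)"
proof -
  obtain b where b: "f = (\<lambda>\<theta>. \<Sum>k\<le>N. b k * sin (real k * \<theta>))" by (rule V_E[OF assms(1)])
  have "(\<lambda>\<theta>. \<Sum>k\<le>N. b k * (cos \<theta> * sin (real k * \<theta>))) \<in> Vsp (Suc N)"
    by (intro V_sum V_scale V_cos_basis) auto
  moreover have "(\<lambda>\<theta>. \<Sum>k\<le>N. b k * (cos \<theta> * sin (real k * \<theta>))) = (\<lambda>\<theta>. cos \<theta> * f \<theta>)"
    by (simp add: b sum_distrib_left algebra_simps)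
  ultimately show ?thesis by simp
qed

lemma V_cospow: "(\<lambda>\<theta>. cos \<theta> ^ j * sin \<theta>) \<in> Vsp (Suc j)"
proof (induction j)
  case 0
  show ?case using V_basis[of 1 1] by simp
next
  case (Suc j)
  from V_cosmul[OF Suc] show ?case by (simp add: mult.assoc)
qed

lemma V_affpow: "(\<lambda>\<theta>. (c - a * cos \<theta>) ^ j * sin \<theta>) \<in> Vsp (Suc j)"
proof -
  have eq: "(c - a * cos \<theta>) ^ j * sin \<theta> = (\<Sum>m\<le>j. (real (j choose m) * (- a) ^ m * c ^ (j - m)) * (cos \<theta> ^ m * sin \<theta>))" for \<theta>
  proof -
    have "(c - a * cos \<theta>) ^ j = ((- a) * cos \<theta> + c) ^ j" by simp
    also have "\<dots> = (\<Sum>m\<le>j. of_nat (j choose m) * ((- a) * cos \<theta>) ^ m * c ^ (j - m))"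
      by (rule binomial_ring)
    also have "\<dots> = (\<Sum>m\<le>j. (real (j choose m) * (- a) ^ m * c ^ (j - m)) * cos \<theta> ^ m)"
      by (rule sum.cong) (auto simp: power_mult_distrib[symmetric])
    finally show ?thesis
      by (simp add: sum_distrib_right mult.assoc)
  qed
  have "(\<lambda>\<theta>. \<Sum>m\<le>j. (real (j choose m) * (- a) ^ m * c ^ (j - m)) * (cos \<theta> ^ m * sin \<theta>)) \<in> Vsp (Suc j)"
    by (intro V_sum V_scale V_mono[OF V_cospow]) auto
  then show ?thesis by (simp add: eq)
qed


lemma sin_int_pi: assumes "r \<in> \<int>" shows "sin (r * pi) = 0"
proof -
  from assms obtain i where "r = real_of_int i" by (auto elim: Ints_cases)
  then show ?thesis unfolding sin_zero_iff_int2 by blast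
qed

lemma orth_has_int:
  fixes j k :: nat
  shows "((\<lambda>\<theta>. sin (real j * \<theta>) * sin (real k * \<theta>)) has_integral (if j = k \<and> j \<noteq> 0 then pi/2 else 0)) {0..pi}"
proof (cases "j = k")
  case True
  show ?thesis
  proof (cases "j = 0")
    case True then show ?thesis using \<open>j = k\<close> by simp
  next
    case False
    define F where "F \<theta> = \<theta>/2 - sin (2 * real k * \<theta>) / (4 * real k)" for \<theta>
    have kpos: "real k > 0" using False True by simp
    have "((\<lambda>\<theta>. sin (real j * \<theta>) * sin (real k * \<theta>)) has_integral (F pi - F 0)) {0..pi}"
    proof (rule fundamental_theorem_of_calculus)
      fix x assume "x \<in> {0..pi}"
      have "(F has_real_derivative (1/2 - cos (2 * real k * x) * (2 * real k) / (4 * real k))) (at x within {0..pi})"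
        unfolding F_def by (auto intro!: derivative_eq_intros)
      moreover have "1/2 - cos (2 * real k * x) * (2 * real k) / (4 * real k) = sin (real j * x) * sin (real k * x)"
      proof -
        have "sin (real j * x) * sin (real k * x) = (cos (real k * x - real k * x) - cos (real k * x + real k * x)) / 2"
          using True by (simp add: sin_times_sin)
        also have "real k * x + real k * x = 2 * real k * x" by simp
        finally show ?thesis using kpos by (simp add: field_simps)
      qed
      ultimately show "(F has_vector_derivative sin (real j * x) * sin (real k * x)) (at x within {0..pi})"
        by (simp add: has_real_derivative_iff_has_vector_derivative)
    qed simp
    moreover have "F pi - F 0 = pi / 2"
    proof -
      have "sin (2 * real k * pi) = 0" by (rule sin_int_pi) auto
      then show ?thesis by (simp add: F_def)
    qed
    ultimately show ?thesis using False True by simp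
  qed
next
  case False
  define u where "u = real j - real k"
  define v where "v = real j + real k"
  have u0: "u \<noteq> 0" using False by (simp add: u_def)
  have v0: "v \<noteq> 0" using False by (simp add: v_def)
  define F where "F \<theta> = sin (u * \<theta>) / (2 * u) - sin (v * \<theta>) / (2 * v)" for \<theta>
  have "((\<lambda>\<theta>. sin (real j * \<theta>) * sin (real k * \<theta>)) has_integral (F pi - F 0)) {0..pi}"
  proof (rule fundamental_theorem_of_calculus)
    fix x assume "x \<in> {0..pi}"
    have "(F has_real_derivative (cos (u * x) * u / (2 * u) - cos (v * x) * v / (2 * v))) (at x within {0..pi})"
      unfolding F_def by (auto intro!: derivative_eq_intros)
    moreover have "cos (u * x) * u / (2 * u) - cos (v * x) * v / (2 * v) = sin (real j * x) * sin (real k * x)"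
    proof -
      have "sin (real j * x) * sin (real k * x) = (cos (real j * x - real k * x) - cos (real j * x + real k * x)) / 2"
        by (simp add: sin_times_sin)
      also have "real j * x - real k * x = u * x" by (simp add: u_def algebra_simps)
      also have "real j * x + real k * x = v * x" by (simp add: v_def algebra_simps)
      finally show ?thesis using u0 v0 by (simp add: field_simps)
    qed
    ultimately show "(F has_vector_derivative sin (real j * x) * sin (real k * x)) (at x within {0..pi})"
      by (simp add: has_real_derivative_iff_has_vector_derivative)
  qed simp
  moreover have "F pi - F 0 = 0"
  proof -
    have "sin (u * pi) = 0" by (rule sin_int_pi) (simp add: u_def)
    moreover have "sin (v * pi) = 0" by (rule sin_int_pi) (simp add: v_def)
    ultimately show ?thesis by (simp add: F_def)
  qed
  ultimately show ?thesis using False by simp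
qed

definition Dn :: "nat \<Rightarrow> real \<Rightarrow> real" where
  "Dn n \<theta> = (\<Sum>l\<le>n. sin (real l * pi / 2) * sin (real l * \<theta>))"

lemma Dn_V: "Dn n \<in> Vsp n"
  by (rule V_I[where b="\<lambda>l. sin (real l * pi / 2)"]) (simp add: Dn_def fun_eq_iff)

lemma V_Dn_integral:
  assumes "g \<in> Vsp N" "N \<le> n"
  shows "((\<lambda>\<theta>. g \<theta> * Dn n \<theta>) has_integral (pi/2 * g (pi/2))) {0..pi}"
proof -
  obtain b where b: "g = (\<lambda>\<theta>. \<Sum>k\<le>N. b k * sin (real k * \<theta>))" by (rule V_E[OF assms(1)])
  define c where "c l = sin (real l * pi / 2)" for l :: nat
  have eq: "g \<theta> * Dn n \<theta> = (\<Sum>k\<le>N. \<Sum>l\<le>n. (b k * c l) * (sin (real k * \<theta>) * sin (real l * \<theta>)))" for \<theta>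
    unfolding b Dn_def c_def sum_product by (simp add: mult_ac)
  have I: "((\<lambda>\<theta>. \<Sum>k\<le>N. \<Sum>l\<le>n. (b k * c l) * (sin (real k * \<theta>) * sin (real l * \<theta>))) has_integral
         (\<Sum>k\<le>N. \<Sum>l\<le>n. (b k * c l) * (if k = l \<and> k \<noteq> 0 then pi/2 else 0))) {0..pi}"
    by (intro has_integral_sum has_integral_mult_right orth_has_int) auto
  have E: "(\<Sum>k\<le>N. \<Sum>l\<le>n. (b k * c l) * (if k = l \<and> k \<noteq> 0 then pi/2 else 0)) = pi/2 * g (pi/2)"
  proof -
    have "(\<Sum>k\<le>N. \<Sum>l\<le>n. (b k * c l) * (if k = l \<and> k \<noteq> 0 then pi/2 else 0))
        = (\<Sum>k\<le>N. \<Sum>l\<le>n. (if l = k then b k * c k * pi/2 else 0))"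
    proof (rule sum.cong[OF refl], rule sum.cong[OF refl])
      fix k l assume "k \<in> {..N}" "l \<in> {..n}"
      show "(b k * c l) * (if k = l \<and> k \<noteq> 0 then pi/2 else 0) = (if l = k then b k * c k * pi/2 else 0)"
        by (cases "k = 0") (auto simp: c_def)
    qed
    also have "\<dots> = (\<Sum>k\<le>N. b k * c k * pi/2)"
      using assms(2) by (intro sum.cong refl) auto
    also have "\<dots> = pi/2 * g (pi/2)"
      by (simp add: b c_def sum_distrib_left algebra_simps)
    finally show ?thesis .
  qed
  have F: "(\<lambda>\<theta>. g \<theta> * Dn n \<theta>) = (\<lambda>\<theta>. \<Sum>k\<le>N. \<Sum>l\<le>n. (b k * c l) * (sin (real k * \<theta>) * sin (real l * \<theta>)))"
    by (rule ext) (rule eq)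
  show ?thesis using I unfolding F E .
qed

lemma Dn_sq_integral: "((\<lambda>\<theta>. Dn n \<theta> * Dn n \<theta>) has_integral (pi/2 * Dn n (pi/2))) {0..pi}"
  using V_Dn_integral[OF Dn_V order_refl] .

lemma Dn_half_le: "Dn n (pi/2) \<le> real n + 1"
proof -
  have "Dn n (pi/2) = (\<Sum>l\<le>n. sin (real l * pi / 2) * sin (real l * pi / 2))"
    by (simp add: Dn_def mult.assoc)
  also have "\<dots> \<le> (\<Sum>l\<le>n. 1)"
  proof (rule sum_mono)
    fix l show "sin (real l * pi / 2) * sin (real l * pi / 2) \<le> 1"
      using sin_cos_squared_add3[of "real l * pi / 2"] zero_le_square[of "cos (real l * pi / 2)"] by linarith
  qed
  finally show ?thesis by simp
qed


definition Fk :: "nat \<Rightarrow> real \<Rightarrow> real \<Rightarrow> real \<Rightarrow> real" where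
  "Fk d c a t = 2 / (pi * a) * Dn (Suc d) (arccos ((c - t) / a))"

definition kern :: "nat \<Rightarrow> real \<Rightarrow> real \<Rightarrow> real \<Rightarrow> real" where
  "kern d c a t = indicator {c - a..c + a} t * Fk d c a t"

lemma Dn_cont[continuous_intros]: fixes f :: "real \<Rightarrow> real" assumes "continuous_on A f" shows "continuous_on A (\<lambda>x. Dn n (f x))"
proof -
  have "continuous_on A (\<lambda>x. sin (real l * f x))" for l
    by (rule continuous_on_sin[OF continuous_on_mult_left[OF assms]])
  then show ?thesis unfolding Dn_def by (intro continuous_on_sum continuous_on_mult_left) auto
qed

lemma Fk_cont: assumes "a > 0" shows "continuous_on {c - a..c + a} (Fk d c a)"
proof -
  have "\<forall>t\<in>{c - a..c + a}. - 1 \<le> (c - t) / a \<and> (c - t) / a \<le> 1"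
    using assms by (auto simp: field_simps)
  then show ?thesis unfolding Fk_def by (intro continuous_intros) (use assms in auto)
qed

lemma Fk_cos: assumes "a > 0" "0 \<le> \<theta>" "\<theta> \<le> pi" shows "Fk d c a (c - a * cos \<theta>) = 2 / (pi * a) * Dn (Suc d) \<theta>"
  using assms by (simp add: Fk_def arccos_cos)

lemma subst_cos:
  assumes "a > 0" "continuous_on {c - a..c + a} f"
  shows "integral {c - a..c + a} f = integral {0..pi} (\<lambda>\<theta>. a * sin \<theta> * f (c - a * cos \<theta>))"
proof -
  have "((\<lambda>\<theta>. (a * sin \<theta>) *\<^sub>R f (c - a * cos \<theta>)) has_integral
       integral {c - a * cos 0..c - a * cos pi} f) {0..pi}"
  proof (rule has_integral_substitution[where c="c - a" and d="c + a"])
    show "c - a * cos 0 \<le> c - a * cos pi" using assms by simp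
    show "(\<lambda>\<theta>. c - a * cos \<theta>) ` {0..pi} \<subseteq> {c - a..c + a}"
    proof
      fix y assume "y \<in> (\<lambda>\<theta>. c - a * cos \<theta>) ` {0..pi}"
      then obtain \<theta> where y: "y = c - a * cos \<theta>" by auto
      have "\<bar>a * cos \<theta>\<bar> \<le> a" using assms abs_cos_le_one[of \<theta>] by (simp add: abs_mult)
      then show "y \<in> {c - a..c + a}" using y by (auto simp: abs_le_iff)
    qed
    fix x assume "x \<in> {0..pi}"
    show "((\<lambda>\<theta>. c - a * cos \<theta>) has_real_derivative a * sin x) (at x within {0..pi})"
      by (auto intro!: derivative_eq_intros)
  qed (use assms pi_ge_zero in auto)
  then show ?thesis by (simp add: integral_unique)
qed

lemma kern_set:
  assumes "a > 0" "continuous_on {c - a..c + a} g"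
  shows "integrable lborel (\<lambda>t. g t * kern d c a t)"
    and "(\<integral>t. g t * kern d c a t \<partial>lborel) = integral {c - a..c + a} (\<lambda>t. g t * Fk d c a t)"
proof -
  have cont: "continuous_on {c - a..c + a} (\<lambda>t. g t * Fk d c a t)"
    using assms Fk_cont[OF assms(1)] by (intro continuous_intros) auto
  have si: "set_integrable lborel {c - a..c + a} (\<lambda>t. g t * Fk d c a t)"
    by (rule borel_integrable_atLeastAtMost'[OF cont])
  have eq: "(\<lambda>t. g t * kern d c a t) = (\<lambda>t. indicator {c - a..c + a} t *\<^sub>R (g t * Fk d c a t))"
    by (auto simp: kern_def fun_eq_iff)
  show "integrable lborel (\<lambda>t. g t * kern d c a t)"
    using si unfolding set_integrable_def eq .
  show "(\<integral>t. g t * kern d c a t \<partial>lborel) = integral {c - a..c + a} (\<lambda>t. g t * Fk d c a t)"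
    using set_borel_integral_eq_integral(2)[OF si] unfolding set_lebesgue_integral_def eq .
qed

lemma kern_moment:
  assumes "a > 0" "j \<le> d"
  shows "integrable lborel (\<lambda>t. t ^ j * kern d c a t)"
    and "(\<integral>t. t ^ j * kern d c a t \<partial>lborel) = c ^ j"
proof -
  have gc: "continuous_on {c - a..c + a} (\<lambda>t. t ^ j)" by (intro continuous_intros)
  show "integrable lborel (\<lambda>t. t ^ j * kern d c a t)" by (rule kern_set(1)[OF assms(1) gc])
  have "(\<integral>t. t ^ j * kern d c a t \<partial>lborel) = integral {c - a..c + a} (\<lambda>t. t ^ j * Fk d c a t)"
    by (rule kern_set(2)[OF assms(1) gc])
  also have "\<dots> = integral {0..pi} (\<lambda>\<theta>. a * sin \<theta> * ((c - a * cos \<theta>) ^ j * Fk d c a (c - a * cos \<theta>)))"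
    by (rule subst_cos[OF assms(1)]) (use gc Fk_cont[OF assms(1)] in \<open>intro continuous_intros\<close>)
  also have "\<dots> = integral {0..pi} (\<lambda>\<theta>. (2 / pi) * (((c - a * cos \<theta>) ^ j * sin \<theta>) * Dn (Suc d) \<theta>))"
  proof (rule integral_cong)
    fix \<theta> assume "\<theta> \<in> {0..pi}"
    then show "a * sin \<theta> * ((c - a * cos \<theta>) ^ j * Fk d c a (c - a * cos \<theta>)) =
               (2 / pi) * (((c - a * cos \<theta>) ^ j * sin \<theta>) * Dn (Suc d) \<theta>)"
      using assms by (simp add: Fk_cos)
  qed
  also have "\<dots> = (2 / pi) * (pi / 2 * ((c - a * cos (pi/2)) ^ j * sin (pi/2)))"
    using V_Dn_integral[OF V_affpow[of c a j], of "Suc d"] assms(2)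
    by (simp add: integral_mult_right integral_unique)
  also have "\<dots> = c ^ j" by simp
  finally show "(\<integral>t. t ^ j * kern d c a t \<partial>lborel) = c ^ j" .
qed

lemma kern_sq:
  assumes "a > 0"
  shows "integrable lborel (\<lambda>t. kern d c a t * kern d c a t)"
    and "(\<integral>t. kern d c a t * kern d c a t \<partial>lborel) \<le> (real d + 2) / a"
proof -
  have gc: "continuous_on {c - a..c + a} (\<lambda>t. Fk d c a t)" by (rule Fk_cont[OF assms(1)])
  have eq: "(\<lambda>t. kern d c a t * kern d c a t) = (\<lambda>t. Fk d c a t * kern d c a t)"
    by (auto simp: kern_def fun_eq_iff indicator_def)
  show "integrable lborel (\<lambda>t. kern d c a t * kern d c a t)" unfolding eq by (rule kern_set(1)[OF assms(1) gc])
  have "(\<integral>t. kern d c a t * kern d c a t \<partial>lborel) = integral {c - a..c + a} (\<lambda>t. Fk d c a t * Fk d c a t)"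
    unfolding eq by (rule kern_set(2)[OF assms(1) gc])
  also have "\<dots> = integral {0..pi} (\<lambda>\<theta>. a * sin \<theta> * (Fk d c a (c - a * cos \<theta>) * Fk d c a (c - a * cos \<theta>)))"
    by (rule subst_cos[OF assms(1)]) (use gc in \<open>intro continuous_intros\<close>)
  also have "\<dots> = integral {0..pi} (\<lambda>\<theta>. (4 / (pi * pi * a)) * (sin \<theta> * (Dn (Suc d) \<theta> * Dn (Suc d) \<theta>)))"
  proof (rule integral_cong)
    fix \<theta> assume "\<theta> \<in> {0..pi}"
    then show "a * sin \<theta> * (Fk d c a (c - a * cos \<theta>) * Fk d c a (c - a * cos \<theta>)) =
               (4 / (pi * pi * a)) * (sin \<theta> * (Dn (Suc d) \<theta> * Dn (Suc d) \<theta>))"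
      using assms by (simp add: Fk_cos field_simps)
  qed
  also have "\<dots> = (4 / (pi * pi * a)) * integral {0..pi} (\<lambda>\<theta>. sin \<theta> * (Dn (Suc d) \<theta> * Dn (Suc d) \<theta>))"
    by simp
  finally have E1: "(\<integral>t. kern d c a t * kern d c a t \<partial>lborel) = (4 / (pi * pi * a)) * integral {0..pi} (\<lambda>\<theta>. sin \<theta> * (Dn (Suc d) \<theta> * Dn (Suc d) \<theta>))" .
  have I1: "integral {0..pi} (\<lambda>\<theta>. sin \<theta> * (Dn (Suc d) \<theta> * Dn (Suc d) \<theta>)) \<le> integral {0..pi} (\<lambda>\<theta>. Dn (Suc d) \<theta> * Dn (Suc d) \<theta>)"
  proof (rule integral_le)
    show "(\<lambda>\<theta>. sin \<theta> * (Dn (Suc d) \<theta> * Dn (Suc d) \<theta>)) integrable_on {0..pi}"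
      by (intro integrable_continuous_real continuous_intros)
    show "(\<lambda>\<theta>. Dn (Suc d) \<theta> * Dn (Suc d) \<theta>) integrable_on {0..pi}"
      by (intro integrable_continuous_real continuous_intros)
    fix \<theta> show "sin \<theta> * (Dn (Suc d) \<theta> * Dn (Suc d) \<theta>) \<le> Dn (Suc d) \<theta> * Dn (Suc d) \<theta>"
      using mult_right_mono[OF sin_le_one[of \<theta>] zero_le_square[of "Dn (Suc d) \<theta>"]] by simp
  qed
  have I2: "integral {0..pi} (\<lambda>\<theta>. Dn (Suc d) \<theta> * Dn (Suc d) \<theta>) = pi / 2 * Dn (Suc d) (pi/2)"
    by (rule integral_unique[OF Dn_sq_integral])
  have "(\<integral>t. kern d c a t * kern d c a t \<partial>lborel) \<le> (4 / (pi * pi * a)) * (pi / 2 * Dn (Suc d) (pi/2))"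
    unfolding E1 using I1 I2 assms by (intro mult_left_mono) auto
  also have "\<dots> \<le> (4 / (pi * pi * a)) * (pi / 2 * (real d + 2))"
    using Dn_half_le[of "Suc d"] assms by (intro mult_left_mono) auto
  also have "\<dots> = (2 / pi) * ((real d + 2) / a)" using assms by (simp add: field_simps)
  also have "\<dots> \<le> 1 * ((real d + 2) / a)"
    using assms pi_gt3 by (intro mult_right_mono) auto
  finally show "(\<integral>t. kern d c a t * kern d c a t \<partial>lborel) \<le> (real d + 2) / a" by simp
qed

lemma kern_zero: "t \<notin> {c - a..c + a} \<Longrightarrow> kern d c a t = 0"
  by (simp add: kern_def)



lemma integral_lborel_prod_basis:
  fixes f :: "'a::euclidean_space \<Rightarrow> real \<Rightarrow> real"
  assumes int: "\<And>b. b \<in> Basis \<Longrightarrow> integrable lborel (f b)"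
  shows "integrable (lborel::'a measure) (\<lambda>x. \<Prod>b\<in>Basis. f b (x \<bullet> b))"
    and "(\<integral>x. (\<Prod>b\<in>Basis. f b (x \<bullet> b)) \<partial>(lborel::'a measure)) = (\<Prod>b\<in>Basis. \<integral>t. f b t \<partial>lborel)"
proof -
  interpret product_sigma_finite "\<lambda>_::'a. lborel::real measure"
    by (simp add: product_sigma_finite_def sigma_finite_lborel)
  have meas[measurable]: "(\<lambda>g. \<Sum>b\<in>Basis. g b *\<^sub>R b) \<in> measurable (\<Pi>\<^sub>M b\<in>Basis. (lborel::real measure)) (borel::'a measure)"
    by measurable
  have fm[measurable]: "f b \<in> borel_measurable borel" if "b \<in> Basis" for b
    using int[OF that] by (simp add: borel_measurable_integrable)
  have compo: "(\<Sum>b'\<in>Basis. g b' *\<^sub>R b') \<bullet> b = g b" if "b \<in> Basis" for g :: "'a \<Rightarrow> real" and b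
    using that by (simp add: inner_sum_left inner_Basis if_distrib sum.delta cong: if_cong)
  have hm: "(\<lambda>x::'a. \<Prod>b\<in>Basis. f b (x \<bullet> b)) \<in> borel_measurable borel"
    by measurable
  have eqf: "(\<lambda>g. \<Prod>b\<in>Basis. f b ((\<Sum>b'\<in>Basis. g b' *\<^sub>R b') \<bullet> b)) = (\<lambda>g. \<Prod>b\<in>Basis. f b (g b))"
    by (rule ext, rule prod.cong) (auto simp: compo)
  have pint: "integrable (\<Pi>\<^sub>M b\<in>Basis. lborel) (\<lambda>g. \<Prod>b\<in>Basis. f b (g b))"
    by (rule product_integrable_prod) (auto intro: int)
  show "integrable (lborel::'a measure) (\<lambda>x. \<Prod>b\<in>Basis. f b (x \<bullet> b))"
    by (subst lborel_eq, subst integrable_distr_eq[OF meas hm], unfold eqf, rule pint)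
  show "(\<integral>x. (\<Prod>b\<in>Basis. f b (x \<bullet> b)) \<partial>(lborel::'a measure)) = (\<Prod>b\<in>Basis. \<integral>t. f b t \<partial>lborel)"
    by (subst lborel_eq, subst integral_distr[OF meas hm], unfold eqf, rule product_integral_prod) (auto intro: int)
qed


lemma Basis_cart_image: "(Basis :: (real^'p::finite) set) = (\<lambda>i. axis i 1) ` UNIV"
  by (auto simp: Basis_vec_def)

lemma inj_axis1: "inj (\<lambda>i::'p::finite. axis i (1::real))"
  by (rule injI) (simp add: axis_eq_axis)

lemma integral_lborel_prod_cart:
  fixes f :: "'p::finite \<Rightarrow> real \<Rightarrow> real"
  assumes int: "\<And>i. integrable lborel (f i)"
  shows "integrable (lborel::(real^'p) measure) (\<lambda>x. \<Prod>i\<in>UNIV. f i (x $ i))"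
    and "(\<integral>x. (\<Prod>i\<in>UNIV. f i (x $ i)) \<partial>(lborel::(real^'p) measure)) = (\<Prod>i\<in>UNIV. \<integral>t. f i t \<partial>lborel)"
proof -
  define ax where "ax i = (axis i (1::real) :: real^'p)" for i
  define g where "g b = f (inv ax b)" for b :: "real^'p"
  have inj: "inj ax" using inj_axis1 by (simp add: ax_def[abs_def])
  have B: "(Basis :: (real^'p) set) = ax ` UNIV" by (simp add: Basis_cart_image ax_def[abs_def])
  have g_ax: "g (ax i) = f i" for i by (simp add: g_def inv_f_f[OF inj])
  have eq1: "(\<Prod>b\<in>Basis. g b (x \<bullet> b)) = (\<Prod>i\<in>UNIV. f i (x $ i))" for x :: "real^'p"
    unfolding B prod.reindex[OF inj] comp_def g_ax by (simp add: ax_def cart_eq_inner_axis[symmetric])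
  have eq2: "(\<Prod>b\<in>Basis. \<integral>t. g b t \<partial>lborel) = (\<Prod>i\<in>UNIV. \<integral>t. f i t \<partial>lborel)"
    unfolding B prod.reindex[OF inj] comp_def g_ax ..
  have gi: "integrable lborel (g b)" for b unfolding g_def using int by simp
  show "integrable (lborel::(real^'p) measure) (\<lambda>x. \<Prod>i\<in>UNIV. f i (x $ i))"
    using integral_lborel_prod_basis(1)[of g, OF gi] unfolding eq1 .
  show "(\<integral>x. (\<Prod>i\<in>UNIV. f i (x $ i)) \<partial>(lborel::(real^'p) measure)) = (\<Prod>i\<in>UNIV. \<integral>t. f i t \<partial>lborel)"
    using integral_lborel_prod_basis(2)[of g, OF gi] unfolding eq1 eq2 .
qed

lemma cauchy_schwarz_int:
  fixes u v :: "'a \<Rightarrow> real"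
  assumes "integrable M (\<lambda>x. u x * u x)" "integrable M (\<lambda>x. v x * v x)" "integrable M (\<lambda>x. u x * v x)"
  shows "(\<integral>x. u x * v x \<partial>M)^2 \<le> (\<integral>x. u x * u x \<partial>M) * (\<integral>x. v x * v x \<partial>M)"
proof -
  define A where "A = (\<integral>x. u x * u x \<partial>M)"
  define B where "B = (\<integral>x. v x * v x \<partial>M)"
  define C where "C = (\<integral>x. u x * v x \<partial>M)"
  have q: "0 \<le> A - 2 * t * C + t * t * B" for t
  proof -
    have "0 \<le> (\<integral>x. (u x - t * v x) * (u x - t * v x) \<partial>M)"
      by (rule integral_nonneg_AE) auto
    also have "(\<lambda>x. (u x - t * v x) * (u x - t * v x)) = (\<lambda>x. u x * u x - (2 * t) * (u x * v x) + (t * t) * (v x * v x))"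
      by (auto simp: fun_eq_iff algebra_simps)
    also have "(\<integral>x. u x * u x - (2 * t) * (u x * v x) + (t * t) * (v x * v x) \<partial>M) = A - 2 * t * C + t * t * B"
      using assms by (simp add: A_def B_def C_def)
    finally show ?thesis .
  qed
  have B0: "0 \<le> B" unfolding B_def by (rule integral_nonneg_AE) auto
  show ?thesis
  proof (cases "B = 0")
    case True
    have "C = 0"
    proof (rule ccontr)
      assume "C \<noteq> 0"
      have "0 \<le> A - 2 * ((A + 1) / (2 * C)) * C" using q[of "(A + 1) / (2 * C)"] True by simp
      also have "\<dots> = -1" using \<open>C \<noteq> 0\<close> by (simp add: field_simps)
      finally show False by simp
    qed
    then show ?thesis using True by (simp add: A_def B_def C_def[symmetric])
  next
    case False
    then have Bp: "B > 0" using B0 by simp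
    have "0 \<le> A - 2 * (C / B) * C + (C / B) * (C / B) * B" by (rule q)
    also have "\<dots> = A - C * C / B" using Bp by (simp add: field_simps)
    finally have "C * C / B \<le> A" by simp
    then have "C * C \<le> A * B" using Bp by (simp add: divide_le_eq)
    then show ?thesis by (simp add: A_def B_def C_def power2_eq_square)
  qed
qed


definition boxc :: "real^'p::finite \<Rightarrow> real \<Rightarrow> (real^'p) set" where
  "boxc x0 a = cbox (x0 - (\<chi> i. a)) (x0 + (\<chi> i. a))"

lemma mem_boxc: "y \<in> boxc x0 a \<longleftrightarrow> (\<forall>i. x0 $ i - a \<le> y $ i \<and> y $ i \<le> x0 $ i + a)"
  by (simp add: boxc_def mem_box_cart)

lemma compact_boxc: "compact (boxc x0 a)"
  by (simp add: boxc_def)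

lemma integrable_ind_cont:
  fixes f :: "real^'p::finite \<Rightarrow> real"
  assumes "compact K" "continuous_on K f"
  shows "integrable lborel (\<lambda>x. indicator K x * f x)"
  using borel_integrable_compact[OF assms] by simp

lemma alpha_le_d: "\<alpha> \<in> multi_indices d \<Longrightarrow> \<alpha> i \<le> d"
  using member_le_sum[of i UNIV \<alpha>] by (auto simp: multi_indices_def)

lemma box_lower:
  fixes P :: "real^'p::finite \<Rightarrow> real"
  assumes P: "P \<in> poly_deg_le d" and P1: "P x0 = 1" and a: "a > 0"
  shows "(a / (real d + 2)) ^ CARD('p) \<le> (\<integral>x. indicator (boxc x0 a) x * (P x * P x) \<partial>lborel)"
proof -
  define G where "G y = (\<Prod>i\<in>UNIV. kern d (x0 $ i) a (y $ i))" for y :: "real^'p"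
  obtain c where Pc: "P = (\<lambda>x. \<Sum>\<alpha>\<in>multi_indices d. c \<alpha> * mono_f \<alpha> x)" by (rule pd_E[OF P])
  have mono_int: "integrable lborel (\<lambda>y. mono_f \<alpha> y * G y) \<and> (\<integral>y. mono_f \<alpha> y * G y \<partial>lborel) = mono_f \<alpha> x0"
    if "\<alpha> \<in> multi_indices d" for \<alpha>
  proof -
    have eq: "(\<lambda>y. mono_f \<alpha> y * G y) = (\<lambda>y. \<Prod>i\<in>UNIV. (y $ i) ^ \<alpha> i * kern d (x0 $ i) a (y $ i))"
      by (simp add: mono_f_def G_def prod.distrib fun_eq_iff)
    have fi: "integrable lborel (\<lambda>t. t ^ \<alpha> i * kern d (x0 $ i) a t)" for i
      by (rule kern_moment(1)[OF a alpha_le_d[OF that]])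
    show ?thesis unfolding eq
      using integral_lborel_prod_cart[of "\<lambda>i t. t ^ \<alpha> i * kern d (x0 $ i) a t", OF fi]
      by (simp add: kern_moment(2)[OF a alpha_le_d[OF that]] mono_f_def)
  qed
  have mi1: "integrable lborel (\<lambda>y. mono_f \<alpha> y * G y)" if "\<alpha> \<in> multi_indices d" for \<alpha>
    using mono_int[OF that] by blast
  have PGeq: "(\<lambda>y. P y * G y) = (\<lambda>y. \<Sum>\<alpha>\<in>multi_indices d. c \<alpha> * (mono_f \<alpha> y * G y))"
    by (simp add: Pc sum_distrib_right mult.assoc fun_eq_iff)
  have PGint: "integrable lborel (\<lambda>y. P y * G y)"
    unfolding PGeq by (auto intro!: integrable_sum integrable_mult_right mi1)
  have "(\<integral>y. P y * G y \<partial>lborel) = (\<Sum>\<alpha>\<in>multi_indices d. c \<alpha> * (\<integral>y. mono_f \<alpha> y * G y \<partial>lborel))"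
    unfolding PGeq by (subst Bochner_Integration.integral_sum) (auto intro!: integrable_mult_right mi1)
  also have "\<dots> = (\<Sum>\<alpha>\<in>multi_indices d. c \<alpha> * mono_f \<alpha> x0)"
    using mono_int by (intro sum.cong) auto
  also have "\<dots> = 1" using P1 by (simp add: Pc)
  finally have PG1: "(\<integral>y. P y * G y \<partial>lborel) = 1" .
  have GGeq: "(\<lambda>y. G y * G y) = (\<lambda>y. \<Prod>i\<in>UNIV. kern d (x0 $ i) a (y $ i) * kern d (x0 $ i) a (y $ i))"
    by (simp add: G_def prod.distrib fun_eq_iff)
  have ki: "integrable lborel (\<lambda>t. kern d (x0 $ i) a t * kern d (x0 $ i) a t)" for i
    by (rule kern_sq(1)[OF a])
  have GGint: "integrable lborel (\<lambda>y. G y * G y)"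
    unfolding GGeq by (rule integral_lborel_prod_cart(1)[OF ki])
  have "(\<integral>y. G y * G y \<partial>lborel) = (\<Prod>i\<in>UNIV. \<integral>t. kern d (x0 $ i) a t * kern d (x0 $ i) a t \<partial>lborel)"
    unfolding GGeq by (rule integral_lborel_prod_cart(2)[OF ki])
  also have "\<dots> \<le> (\<Prod>i\<in>(UNIV::'p set). (real d + 2) / a)"
  proof (rule prod_mono)
    fix i :: 'p
    show "0 \<le> (\<integral>t. kern d (x0 $ i) a t * kern d (x0 $ i) a t \<partial>lborel) \<and>
          (\<integral>t. kern d (x0 $ i) a t * kern d (x0 $ i) a t \<partial>lborel) \<le> (real d + 2) / a"
      using kern_sq(2)[OF a, of d "x0 $ i"] by (auto intro: integral_nonneg_AE)
  qed
  finally have GGle: "(\<integral>y. G y * G y \<partial>lborel) \<le> ((real d + 2) / a) ^ CARD('p)" by simp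
  define u where "u y = indicator (boxc x0 a) y * P y" for y
  have Gz: "G y = 0" if "y \<notin> boxc x0 a" for y
  proof -
    from that obtain i where "\<not> (x0 $ i - a \<le> y $ i \<and> y $ i \<le> x0 $ i + a)" by (auto simp: mem_boxc)
    then have "kern d (x0 $ i) a (y $ i) = 0" by (intro kern_zero) auto
    then show ?thesis unfolding G_def by (intro prod_zero) auto
  qed
  have uv: "(\<lambda>y. u y * G y) = (\<lambda>y. P y * G y)"
    by (auto simp: u_def fun_eq_iff Gz indicator_def)
  have uu: "(\<lambda>y. u y * u y) = (\<lambda>y. indicator (boxc x0 a) y * (P y * P y))"
    by (auto simp: u_def fun_eq_iff indicator_def)
  have contPP: "continuous_on (boxc x0 a) (\<lambda>y. P y * P y)"
    using pd_continuous[OF P] by (intro continuous_intros) auto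
  have uuint: "integrable lborel (\<lambda>y. u y * u y)"
    unfolding uu by (rule integrable_ind_cont[OF compact_boxc contPP])
  have "1 = (\<integral>y. u y * G y \<partial>lborel)^2" unfolding uv PG1 by simp
  also have "\<dots> \<le> (\<integral>y. u y * u y \<partial>lborel) * (\<integral>y. G y * G y \<partial>lborel)"
    by (rule cauchy_schwarz_int[OF uuint GGint]) (simp add: uv PGint)
  also have "\<dots> \<le> (\<integral>y. u y * u y \<partial>lborel) * ((real d + 2) / a) ^ CARD('p)"
    by (intro mult_left_mono GGle) (auto intro: integral_nonneg_AE)
  finally have main: "1 \<le> (\<integral>y. u y * u y \<partial>lborel) * ((real d + 2) / a) ^ CARD('p)" .
  have pos: "0 < ((real d + 2) / a) ^ CARD('p)" using a by simp
  have "(a / (real d + 2)) ^ CARD('p) = 1 / ((real d + 2) / a) ^ CARD('p)"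
    by (simp add: power_divide)
  also have "\<dots> \<le> (\<integral>y. u y * u y \<partial>lborel)"
    using main pos by (simp add: divide_le_eq)
  finally show ?thesis unfolding uu .
qed



lemma int_muS:
  fixes S :: "(real^'p::finite) set" and f :: "real^'p \<Rightarrow> real"
  assumes S: "compact S" and vol: "measure lborel S > 0" and f: "continuous_on UNIV f"
  shows "(\<integral>x. f x \<partial>mu_S S) = (\<integral>x. indicator S x * f x \<partial>lborel) / measure lborel S"
proof -
  have Sm[measurable]: "S \<in> sets lborel" using S by (simp add: borel_compact)
  have fin: "emeasure lborel S = ennreal (measure lborel S)"
    using emeasure_bounded_finite[OF compact_imp_bounded[OF S]] by (simp add: emeasure_eq_ennreal_measure less_top)
  have dens: "(\<lambda>x. indicator S x / emeasure lborel S) = (\<lambda>x. ennreal (indicator S x / measure lborel S))"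
  proof
    fix x show "indicator S x / emeasure lborel S = ennreal (indicator S x / measure lborel S)"
    proof (cases "x \<in> S")
      case True
      then show ?thesis using divide_ennreal[of 1 "measure lborel S"] vol by (simp add: fin)
    next
      case False then show ?thesis by simp
    qed
  qed
  have fm[measurable]: "f \<in> borel_measurable lborel"
    using f by (simp add: borel_measurable_continuous_onI)
  have "(\<integral>x. f x \<partial>mu_S S) = (\<integral>x. (indicator S x / measure lborel S) *\<^sub>R f x \<partial>lborel)"
    unfolding mu_S_def uniform_measure_def dens by (rule integral_density) auto
  also have "\<dots> = (\<integral>x. indicator S x * f x \<partial>lborel) / measure lborel S"
  proof -
    have "(\<lambda>x. (indicator S x / measure lborel S) *\<^sub>R f x) = (\<lambda>x. indicator S x * f x / measure lborel S)"
      by (simp add: fun_eq_iff)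
    then show ?thesis by (simp only: integral_divide_zero)
  qed
  finally show ?thesis .
qed

lemma christoffel_le:
  assumes "P \<in> poly_deg_le d" "P \<xi> = 1"
  shows "christoffel \<nu> d \<xi> \<le> (\<integral>x. (P x)\<^sup>2 \<partial>\<nu>)"
  unfolding christoffel_def
proof (rule cInf_lower)
  show "(\<integral>x. (P x)\<^sup>2 \<partial>\<nu>) \<in> {(\<integral>x. (P x)\<^sup>2 \<partial>\<nu>) | P. P \<in> poly_deg_le d \<and> P \<xi> = 1}"
    using assms by blast
  show "bdd_below {(\<integral>x. (P x)\<^sup>2 \<partial>\<nu>) | P. P \<in> poly_deg_le d \<and> P \<xi> = 1}"
    by (rule bdd_belowI[of _ 0]) (auto intro!: integral_nonneg_AE)
qed

lemma christoffel_ge: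
  assumes "\<And>P. P \<in> poly_deg_le d \<Longrightarrow> P \<xi> = 1 \<Longrightarrow> L \<le> (\<integral>x. (P x)\<^sup>2 \<partial>\<nu>)"
  shows "L \<le> christoffel \<nu> d \<xi>"
  unfolding christoffel_def
proof (rule cInf_greatest)
  show "{(\<integral>x. (P x)\<^sup>2 \<partial>\<nu>) | P. P \<in> poly_deg_le d \<and> P \<xi> = 1} \<noteq> {}"
    using pd_const[of 1 d] by blast
  show "\<And>y. y \<in> {(\<integral>x. (P x)\<^sup>2 \<partial>\<nu>) | P. P \<in> poly_deg_le d \<and> P \<xi> = 1} \<Longrightarrow> L \<le> y"
    using assms by blast
qed

lemma christoffel_box:
  fixes S :: "(real^'p::finite) set"
  assumes S: "compact S" and vol: "measure lborel S > 0" and a: "a > 0" and sub: "boxc x0 a \<subseteq> S"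
  shows "(a / (real d + 2)) ^ CARD('p) / measure lborel S \<le> christoffel (mu_S S) d x0"
proof (rule christoffel_ge)
  fix P :: "real^'p \<Rightarrow> real" assume P: "P \<in> poly_deg_le d" and P1: "P x0 = 1"
  have cont: "continuous_on UNIV (\<lambda>x. (P x)\<^sup>2)" using pd_continuous[OF P] by (intro continuous_intros)
  have "(a / (real d + 2)) ^ CARD('p) \<le> (\<integral>x. indicator (boxc x0 a) x * (P x * P x) \<partial>lborel)"
    by (rule box_lower[OF P P1 a])
  also have "\<dots> \<le> (\<integral>x. indicator S x * (P x * P x) \<partial>lborel)"
  proof (rule integral_mono)
    have cPP: "continuous_on K (\<lambda>x. P x * P x)" for K using pd_continuous[OF P] by (intro continuous_intros)
    show "integrable lborel (\<lambda>x. indicator (boxc x0 a) x * (P x * P x))"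
      by (rule integrable_ind_cont[OF compact_boxc cPP])
    show "integrable lborel (\<lambda>x. indicator S x * (P x * P x))"
      by (rule integrable_ind_cont[OF S cPP])
    fix x show "indicator (boxc x0 a) x * (P x * P x) \<le> indicator S x * (P x * P x)"
      using sub by (auto simp: indicator_def)
  qed
  finally have "(a / (real d + 2)) ^ CARD('p) / measure lborel S \<le> (\<integral>x. indicator S x * (P x * P x) \<partial>lborel) / measure lborel S"
    using vol by (simp add: divide_right_mono)
  also have "\<dots> = (\<integral>x. (P x)\<^sup>2 \<partial>mu_S S)"
    using int_muS[OF S vol cont] by (simp add: power2_eq_square)
  finally show "(a / (real d + 2)) ^ CARD('p) / measure lborel S \<le> (\<integral>x. (P x)\<^sup>2 \<partial>mu_S S)" .
qed



lemma dist_sq_sum: "(dist x y)\<^sup>2 = (\<Sum>i\<in>UNIV. (y $ i - x $ i) * (y $ i - x $ i))" for x y :: "real^'p::finite"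
proof -
  have "(dist x y)\<^sup>2 = (x - y) \<bullet> (x - y)" by (simp add: dist_norm power2_norm_eq_inner)
  also have "\<dots> = (\<Sum>i\<in>UNIV. (x $ i - y $ i) * (x $ i - y $ i))" by (simp add: inner_vec_def)
  also have "\<dots> = (\<Sum>i\<in>UNIV. (y $ i - x $ i) * (y $ i - x $ i))" by (rule sum.cong) (auto simp: algebra_simps)
  finally show ?thesis .
qed

lemma q_bound:
  fixes a r D :: real
  assumes r: "0 < r" "r \<le> D" "r \<le> a"
  shows "((a + D)\<^sup>2 - a\<^sup>2) / ((a + D)\<^sup>2 + a\<^sup>2) \<le> exp (- (2 * r\<^sup>2 / (5 * D\<^sup>2)))"
proof -
  define W where "W = (a + D)\<^sup>2 + a\<^sup>2"
  have a0: "a > 0" using r by simp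
  have D0: "D > 0" using r by simp
  have "0 < a\<^sup>2" using a0 by simp
  then have W0: "W > 0" unfolding W_def by (intro add_nonneg_pos) auto
  have key: "r\<^sup>2 * W \<le> a\<^sup>2 * (5 * D\<^sup>2)"
  proof (cases "a \<le> D")
    case True
    have "W \<le> 5 * D\<^sup>2"
    proof -
      have "(a + D)\<^sup>2 \<le> (2 * D)\<^sup>2" using True a0 by (intro power_mono) auto
      moreover have "a\<^sup>2 \<le> D\<^sup>2" using True a0 by (intro power_mono) auto
      ultimately show ?thesis unfolding W_def by (simp add: power_mult_distrib)
    qed
    then have "r\<^sup>2 * W \<le> r\<^sup>2 * (5 * D\<^sup>2)" by (simp add: mult_left_mono)
    also have "\<dots> \<le> a\<^sup>2 * (5 * D\<^sup>2)" using r by (intro mult_right_mono power_mono) auto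
    finally show ?thesis .
  next
    case False
    have "W \<le> 5 * a\<^sup>2"
    proof -
      have "(a + D)\<^sup>2 \<le> (2 * a)\<^sup>2" using False D0 by (intro power_mono) auto
      then show ?thesis unfolding W_def by (simp add: power_mult_distrib)
    qed
    then have "r\<^sup>2 * W \<le> r\<^sup>2 * (5 * a\<^sup>2)" by (simp add: mult_left_mono)
    also have "\<dots> \<le> D\<^sup>2 * (5 * a\<^sup>2)" using r by (intro mult_right_mono power_mono) auto
    finally show ?thesis by (simp add: algebra_simps)
  qed
  have num: "(a + D)\<^sup>2 - a\<^sup>2 = W - 2 * a\<^sup>2" by (simp add: W_def)
  have "((a + D)\<^sup>2 - a\<^sup>2) / W = 1 - 2 * a\<^sup>2 / W" unfolding num using W0 by (simp add: diff_divide_distrib)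
  also have "2 * r\<^sup>2 / (5 * D\<^sup>2) \<le> 2 * a\<^sup>2 / W"
    using key W0 D0 by (simp add: divide_le_eq le_divide_eq field_simps)
  then have "1 - 2 * a\<^sup>2 / W \<le> 1 + (- (2 * r\<^sup>2 / (5 * D\<^sup>2)))" by simp
  also have "\<dots> \<le> exp (- (2 * r\<^sup>2 / (5 * D\<^sup>2)))" by (rule exp_ge_add_one_self)
  finally show ?thesis unfolding W_def .
qed

lemma qr_alg:
  fixes A N R :: real
  assumes "A + N = 2 * R" "R > 0"
  shows "1 - A / R = (N - A) / (N + A)" "- ((N - A) / (N + A)) = 1 - N / R"
proof -
  have N: "N = 2 * R - A" using assms by simp
  show "1 - A / R = (N - A) / (N + A)" unfolding N using assms(2) by (simp add: field_simps)
  show "- ((N - A) / (N + A)) = 1 - N / R" unfolding N using assms(2) by (simp add: field_simps)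
qed

lemma needle_bound:
  fixes S :: "(real^'p::finite) set" and x :: "real^'p"
  assumes S: "compact S" "S \<noteq> {}" and vol: "measure lborel S > 0"
    and r: "0 < r" "r \<le> diameter S" and x: "r \<le> infdist x S" and d: "d \<ge> 1"
  shows "christoffel (mu_S S) d x \<le> exp (- (2 * r\<^sup>2 / (5 * (diameter S)\<^sup>2))) ^ (d - 1)"
proof -
  define D where "D = diameter S"
  define a where "a = infdist x S"
  have ra: "r \<le> a" using x by (simp add: a_def)
  have a0: "a > 0" using ra r by simp
  have D0: "D > 0" using r by (simp add: D_def)
  obtain s0 where s0: "s0 \<in> S" "infdist x S = dist x s0"
    using infdist_attains_inf[OF compact_imp_closed[OF S(1)] S(2)] by blast
  have dlo: "a \<le> dist x y" if "y \<in> S" for y unfolding a_def by (rule infdist_le[OF that])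
  have dhi: "dist x y \<le> a + D" if "y \<in> S" for y
  proof -
    have "dist x y \<le> dist x s0 + dist s0 y" by (rule dist_triangle)
    also have "dist s0 y \<le> D" unfolding D_def by (rule diameter_bounded_bound[OF compact_imp_bounded[OF S(1)] s0(1) that])
    finally show ?thesis using s0 by (simp add: a_def)
  qed
  define R where "R = (a\<^sup>2 + (a + D)\<^sup>2) / 2"
  have R0: "R > 0" unfolding R_def using a0 by (simp add: add_pos_nonneg)
  define q where "q = ((a + D)\<^sup>2 - a\<^sup>2) / ((a + D)\<^sup>2 + a\<^sup>2)"
  define e0 where "e0 = exp (- (2 * r\<^sup>2 / (5 * D\<^sup>2)))"
  have qe: "q \<le> e0" unfolding q_def e0_def by (rule q_bound) (use r ra in \<open>auto simp: D_def\<close>)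
  have Qeq: "needleQ x R y = 1 - (dist x y)\<^sup>2 / R" for y by (simp add: needleQ_def dist_sq_sum)
  have Qb: "\<bar>needleQ x R y\<bar> \<le> q" if "y \<in> S" for y
  proof -
    have t1: "a\<^sup>2 \<le> (dist x y)\<^sup>2" using dlo[OF that] a0 by (intro power_mono) auto
    have t2: "(dist x y)\<^sup>2 \<le> (a + D)\<^sup>2" using dhi[OF that] by (intro power_mono) auto
    have W: "(a + D)\<^sup>2 + a\<^sup>2 = 2 * R" by (simp add: R_def)
    have up: "1 - (dist x y)\<^sup>2 / R \<le> q"
    proof -
      have "1 - (dist x y)\<^sup>2 / R \<le> 1 - a\<^sup>2 / R" using t1 R0 by (simp add: divide_right_mono)
      also have "\<dots> = q"
        unfolding q_def by (rule qr_alg(1)) (use R0 in \<open>auto simp: R_def\<close>)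
      finally show ?thesis .
    qed
    have lo: "- q \<le> 1 - (dist x y)\<^sup>2 / R"
    proof -
      have "- q = 1 - (a + D)\<^sup>2 / R"
        unfolding q_def by (rule qr_alg(2)) (use R0 in \<open>auto simp: R_def\<close>)
      also have "\<dots> \<le> 1 - (dist x y)\<^sup>2 / R" using t2 R0 by (simp add: divide_right_mono)
      finally show ?thesis .
    qed
    show ?thesis using up lo by (simp add: Qeq abs_le_iff)
  qed
  define n where "n = d div 2"
  define P where "P y = needleQ x R y ^ n" for y
  have Pd: "P \<in> poly_deg_le d"
    using pd_needle_pow[of x R n] by (auto simp: P_def[abs_def] n_def intro: pd_mono)
  have Px: "P x = 1" by (simp add: P_def needleQ_def)
  have e00: "0 \<le> e0" "e0 \<le> 1" unfolding e0_def by auto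
  have Pb: "P y * P y \<le> e0 ^ (d - 1)" if "y \<in> S" for y
  proof -
    have "P y * P y = \<bar>P y\<bar> * \<bar>P y\<bar>" by (simp add: abs_mult_self_eq)
    also have "\<bar>P y\<bar> = \<bar>needleQ x R y\<bar> ^ n" by (simp add: P_def power_abs)
    also have "\<bar>needleQ x R y\<bar> ^ n * \<bar>needleQ x R y\<bar> ^ n = \<bar>needleQ x R y\<bar> ^ (2 * n)" by (simp add: power_add[symmetric] mult_2)
    also have "\<dots> \<le> e0 ^ (2 * n)" using Qb[OF that] qe by (intro power_mono) auto
    also have "\<dots> \<le> e0 ^ (d - 1)" using e00 by (intro power_decreasing) (auto simp: n_def)
    finally show ?thesis .
  qed
  have cont: "continuous_on UNIV (\<lambda>y. (P y)\<^sup>2)" using pd_continuous[OF Pd] by (intro continuous_intros)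
  have "christoffel (mu_S S) d x \<le> (\<integral>y. (P y)\<^sup>2 \<partial>mu_S S)" by (rule christoffel_le[OF Pd Px])
  also have "\<dots> = (\<integral>y. indicator S y * (P y)\<^sup>2 \<partial>lborel) / measure lborel S"
    by (rule int_muS[OF S(1) vol cont])
  also have "(\<integral>y. indicator S y * (P y)\<^sup>2 \<partial>lborel) \<le> (\<integral>y. indicator S y * e0 ^ (d - 1) \<partial>lborel)"
  proof (rule integral_mono)
    have c1: "continuous_on S (\<lambda>y. (P y)\<^sup>2)" using cont by (rule continuous_on_subset) auto
    show "integrable lborel (\<lambda>y. indicator S y * (P y)\<^sup>2)" by (rule integrable_ind_cont[OF S(1) c1])
    show "integrable lborel (\<lambda>y. indicator S y * e0 ^ (d - 1))"
      by (rule integrable_ind_cont[OF S(1)]) (rule continuous_on_const)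
    fix y show "indicator S y * (P y)\<^sup>2 \<le> indicator S y * e0 ^ (d - 1)"
      using Pb[of y] by (auto simp: indicator_def power2_eq_square)
  qed
  also have "(\<integral>y. indicator S y * e0 ^ (d - 1) \<partial>lborel) = e0 ^ (d - 1) * measure lborel S"
    by simp
  finally show ?thesis using vol by (simp add: divide_right_mono e0_def D_def)
qed



lemma sdim_rec: "real (Suc (Suc m)) * real (sdim (Suc (Suc m)) d) = real (Suc (Suc m) + d) * real (sdim (Suc m) d)"
proof -
  have "(Suc (Suc m) + d - d) * ((Suc (Suc m) + d) choose d) = (Suc (Suc m) + d) * ((Suc (Suc m) + d - 1) choose d)"
    by (rule binomial_absorb_comp)
  then have "Suc (Suc m) * ((Suc (Suc m) + d) choose d) = (Suc (Suc m) + d) * ((Suc m + d) choose d)" by simp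
  then show ?thesis unfolding sdim_def by (metis of_nat_mult)
qed

lemma sdim_one: "sdim (Suc 0) d = Suc d"
  by (simp add: sdim_def binomial_Suc_n)

lemma sdim_bounds:
  assumes "p \<ge> 1"
  shows "((real d + 1) / real p) ^ p \<le> real (sdim p d)" "real (sdim p d) \<le> (real d + 1) ^ p"
proof -
  obtain m where pm: "p = Suc m" using assms by (cases p) auto
  have "((real d + 1) / real (Suc m)) ^ (Suc m) \<le> real (sdim (Suc m) d) \<and> real (sdim (Suc m) d) \<le> (real d + 1) ^ (Suc m)"
  proof (induction m)
    case 0 then show ?case by (simp add: sdim_one)
  next
    case (Suc m)
    define s where "s = real (sdim (Suc m) d)"
    define s' where "s' = real (sdim (Suc (Suc m)) d)"
    have rec: "real (Suc (Suc m)) * s' = real (Suc (Suc m) + d) * s" unfolding s_def s'_def by (rule sdim_rec)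
    have s'eq: "s' = (real m + 2 + real d) / (real m + 2) * s"
      using rec by (simp add: field_simps)
    have IH1: "((real d + 1) / real (Suc m)) ^ (Suc m) \<le> s" using Suc.IH unfolding s_def by blast
    have IH2: "s \<le> (real d + 1) ^ (Suc m)" using Suc.IH unfolding s_def by blast
    have s0: "0 \<le> s" by (simp add: s_def)
    have lo: "((real d + 1) / (real m + 2)) ^ (Suc (Suc m)) \<le> s'"
    proof -
      have "((real d + 1) / (real m + 2)) ^ (Suc (Suc m)) = ((real d + 1) / (real m + 2)) * ((real d + 1) / (real m + 2)) ^ (Suc m)"
        by simp
      also have "\<dots> \<le> ((real m + 2 + real d) / (real m + 2)) * ((real d + 1) / real (Suc m)) ^ (Suc m)"
        by (intro mult_mono power_mono divide_left_mono divide_right_mono) auto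
      also have "\<dots> \<le> ((real m + 2 + real d) / (real m + 2)) * s"
        by (intro mult_left_mono IH1) auto
      finally show ?thesis by (simp add: s'eq)
    qed
    have hi: "s' \<le> (real d + 1) ^ (Suc (Suc m))"
    proof -
      have "s' \<le> ((real m + 2 + real d) / (real m + 2)) * (real d + 1) ^ (Suc m)"
        unfolding s'eq by (intro mult_left_mono IH2) auto
      also have "(real m + 2 + real d) / (real m + 2) \<le> real d + 1"
        by (simp add: divide_le_eq algebra_simps)
      then have "((real m + 2 + real d) / (real m + 2)) * (real d + 1) ^ (Suc m) \<le> (real d + 1) * (real d + 1) ^ (Suc m)"
        by (intro mult_right_mono) auto
      finally show ?thesis by simp
    qed
    show ?case using lo hi by (simp add: s'_def add.commute)
  qed
  then show "((real d + 1) / real p) ^ p \<le> real (sdim p d)" "real (sdim p d) \<le> (real d + 1) ^ p"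
    by (simp_all add: pm)
qed

lemma omega_pos: "omega p > 0"
  unfolding omega_def by (intro divide_pos_pos mult_pos_pos Gamma_real_pos) auto

lemma ratio_le1:
  "(real d + 1) * (real d + 2) * (real d + 3) / ((real d + real p + 1) * (real d + real p + 2) * (2 * real d + real p + 6)) \<le> 1"
proof -
  have "(real d + 1) * (real d + 2) * (real d + 3) \<le> (real d + real p + 1) * (real d + real p + 2) * (2 * real d + real p + 6)"
    by (intro mult_mono) auto
  then show ?thesis by (simp add: divide_le_eq)
qed

lemma alpha_le:
  assumes "\<delta> > 0" "volS > 0"
  shows "alpha_thr p \<delta> volS d \<le> \<delta> ^ p * omega p / volS"
proof -
  have "0 \<le> \<delta> ^ p * omega p / volS" using assms omega_pos[of p] by simp
  then show ?thesis unfolding alpha_thr_def by (rule mult_left_le[OF ratio_le1])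
qed

lemma in_Sk:
  fixes S :: "(real^'p::finite) set"
  assumes S: "compact S" and vol: "measure lborel S > 0" and \<delta>: "\<delta> > 0"
    and sub: "boxc x0 (2 * real CARD('p) * (omega CARD('p) + 1) * \<delta>) \<subseteq> S"
  shows "alpha_thr CARD('p) \<delta> (measure lborel S) d \<le> real (sdim CARD('p) d) * christoffel (mu_S S) d x0"
proof -
  define p where "p = CARD('p)"
  define w where "w = omega p"
  define V where "V = measure lborel S"
  define a where "a = 2 * real p * (w + 1) * \<delta>"
  have p1: "p \<ge> 1" by (simp add: p_def Suc_le_eq)
  have w0: "w > 0" by (simp add: w_def omega_pos)
  have a0: "a > 0" using p1 w0 \<delta> by (simp add: a_def)
  have chr: "(a / (real d + 2)) ^ p / V \<le> christoffel (mu_S S) d x0"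
    unfolding p_def V_def by (rule christoffel_box[OF S vol a0]) (use sub in \<open>simp add: a_def p_def w_def\<close>)
  have s_lo: "((real d + 1) / real p) ^ p \<le> real (sdim p d)" by (rule sdim_bounds(1)[OF p1])
  have "(a / (2 * real p)) ^ p \<le> ((real d + 1) / real p * (a / (real d + 2))) ^ p"
  proof (rule power_mono)
    have "a / (2 * real p) = (1 / 2) * (a / real p)" by simp
    also have "\<dots> \<le> ((real d + 1) / (real d + 2)) * (a / real p)"
      using a0 p1 by (intro mult_right_mono) (auto simp: field_simps)
    also have "\<dots> = (real d + 1) / real p * (a / (real d + 2))" by (simp add: field_simps)
    finally show "a / (2 * real p) \<le> (real d + 1) / real p * (a / (real d + 2))" .
  qed (use a0 p1 in auto)
  also have "\<dots> = ((real d + 1) / real p) ^ p * (a / (real d + 2)) ^ p" by (rule power_mult_distrib)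
  also have "\<dots> \<le> real (sdim p d) * (a / (real d + 2)) ^ p"
    using s_lo a0 by (intro mult_right_mono) auto
  finally have A: "(a / (2 * real p)) ^ p \<le> real (sdim p d) * (a / (real d + 2)) ^ p" .
  have "a / (2 * real p) = (w + 1) * \<delta>" using p1 by (simp add: a_def)
  then have "(a / (2 * real p)) ^ p = (w + 1) ^ p * \<delta> ^ p" by (simp add: power_mult_distrib)
  moreover have "w + 1 \<le> (w + 1) ^ p" using w0 p1 by (intro self_le_power) auto
  ultimately have B: "w * \<delta> ^ p \<le> (a / (2 * real p)) ^ p" using \<delta> w0
    by (smt (verit) mult_right_mono zero_le_power)
  have "alpha_thr p \<delta> V d \<le> \<delta> ^ p * w / V" unfolding w_def by (rule alpha_le[OF \<delta>]) (use vol in \<open>simp add: V_def\<close>)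
  also have "\<dots> \<le> (real (sdim p d) * (a / (real d + 2)) ^ p) / V"
    using A B vol by (intro divide_right_mono) (auto simp: V_def mult.commute)
  also have "\<dots> = real (sdim p d) * ((a / (real d + 2)) ^ p / V)" by simp
  also have "\<dots> \<le> real (sdim p d) * christoffel (mu_S S) d x0"
    using chr by (intro mult_left_mono) auto
  finally show ?thesis by (simp add: p_def V_def)
qed



lemma two_powr_ge_exp: fixes t :: real assumes "t \<ge> 0" shows "exp (- t) \<le> 2 powr (- t)"
proof -
  have l2: "0 \<le> ln (2::real)" "ln (2::real) \<le> 1" using ln_2_less_1 by auto
  have "t * ln 2 \<le> t * 1" using assms l2 by (intro mult_left_mono) auto
  then have "- t \<le> - t * ln 2" by simp
  then have "exp (- t) \<le> exp (- t * ln 2)" by simp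
  also have "exp (- t * ln 2) = 2 powr (- t)" by (simp add: powr_def)
  finally show ?thesis .
qed

lemma le_mult_ge1: "0 \<le> (z::real) \<Longrightarrow> 1 \<le> c \<Longrightarrow> z \<le> z * c"
  by (metis mult_left_mono mult.right_neutral)

lemma deg_cond_lower:
  assumes dc: "deg_cond p \<delta> D V d" and p: "p \<ge> 1" and d: "d \<ge> 1" and \<delta>: "\<delta> > 0" and D: "D > 0"
  shows "8 * exp (- (\<delta> * real d / D)) * real d ^ p * (1 / real p) ^ p \<le> alpha_thr p \<delta> V d"
proof -
  define t where "t = \<delta> * real d / (\<delta> + D)"
  have t0: "t \<ge> 0" using \<delta> D by (simp add: t_def)
  have tle: "t \<le> \<delta> * real d / D" unfolding t_def using \<delta> D by (intro divide_left_mono) auto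
  have "8 * exp (- (\<delta> * real d / D)) \<le> 8 * 2 powr (- t)"
    using tle two_powr_ge_exp[OF t0] by (smt (verit) exp_le_cancel_iff)
  also have "8 * 2 powr (- t) = 2 powr (3 - t)"
    by (simp add: powr_diff powr_minus divide_inverse)
  finally have A: "8 * exp (- (\<delta> * real d / D)) \<le> 2 powr (3 - t)" .
  have B: "(1 / real p) ^ p \<le> (exp 1 / real p) ^ p"
    using p by (intro power_mono divide_right_mono) auto
  have C: "1 \<le> exp (real p ^ 2 / real d)" by simp
  have "8 * exp (- (\<delta> * real d / D)) * real d ^ p * (1 / real p) ^ p
        \<le> 2 powr (3 - t) * real d ^ p * (exp 1 / real p) ^ p"
    by (rule mult_mono[OF mult_right_mono[OF A] B]) auto
  also have "\<dots> \<le> 2 powr (3 - t) * real d ^ p * (exp 1 / real p) ^ p * exp (real p ^ 2 / real d)"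
    using C by (intro le_mult_ge1) auto
  also have "\<dots> \<le> alpha_thr p \<delta> V d" using dc by (simp add: deg_cond_def t_def)
  finally show ?thesis .
qed

lemma out_Sk:
  fixes S :: "(real^'p::finite) set"
  assumes S: "compact S" "S \<noteq> {}" and vol: "measure lborel S > 0" and \<delta>: "\<delta> > 0"
    and D: "diameter S > 0"
    and rD: "sqrt (5 * diameter S * \<delta>) \<le> diameter S" and d: "d \<ge> 1"
    and dc: "deg_cond CARD('p) \<delta> (diameter S) (measure lborel S) d"
    and big: "(2 * real CARD('p)) ^ CARD('p) < exp ((real d - 2) * \<delta> / diameter S)"
    and x: "sqrt (5 * diameter S * \<delta>) \<le> infdist x S"
  shows "real (sdim CARD('p) d) * christoffel (mu_S S) d x < alpha_thr CARD('p) \<delta> (measure lborel S) d"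
proof -
  define p where "p = CARD('p)"
  define Dm where "Dm = diameter S"
  define r where "r = sqrt (5 * Dm * \<delta>)"
  have p1: "p \<ge> 1" by (simp add: p_def Suc_le_eq)
  have D0: "Dm > 0" using D by (simp add: Dm_def)
  have r0: "r > 0" using D0 \<delta> by (simp add: r_def)
  have r2: "r\<^sup>2 = 5 * Dm * \<delta>" using D0 \<delta> by (simp add: r_def)
  have chr: "christoffel (mu_S S) d x \<le> exp (- (2 * r\<^sup>2 / (5 * Dm\<^sup>2))) ^ (d - 1)"
    unfolding Dm_def by (rule needle_bound[OF S vol]) (use r0 rD x d in \<open>auto simp: r_def Dm_def\<close>)
  have e1: "exp (- (2 * r\<^sup>2 / (5 * Dm\<^sup>2))) ^ (d - 1) = exp (- (\<delta> * real d / Dm)) / exp ((real d - 2) * \<delta> / Dm)"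
  proof -
    have "exp (- (2 * r\<^sup>2 / (5 * Dm\<^sup>2))) ^ (d - 1) = exp (real (d - 1) * (- (2 * r\<^sup>2 / (5 * Dm\<^sup>2))))"
      by (rule exp_of_nat_mult[symmetric])
    also have "real (d - 1) * (- (2 * r\<^sup>2 / (5 * Dm\<^sup>2))) = - (\<delta> * real d / Dm) - (real d - 2) * \<delta> / Dm"
    proof -
      have rd: "real (d - 1) = real d - 1" using d by (simp add: of_nat_diff)
      show ?thesis unfolding rd r2 using D0 by (simp add: field_simps power2_eq_square)
    qed
    finally show ?thesis by (simp add: exp_diff)
  qed
  define E where "E = exp ((real d - 2) * \<delta> / Dm)"
  define X where "X = exp (- (\<delta> * real d / Dm))"
  have E0: "E > 0" and X0: "X > 0" by (simp_all add: E_def X_def)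
  have s_hi: "real (sdim p d) \<le> (2 * real d) ^ p"
  proof -
    have "real (sdim p d) \<le> (real d + 1) ^ p" by (rule sdim_bounds(2)[OF p1])
    also have "\<dots> \<le> (2 * real d) ^ p" using d by (intro power_mono) auto
    finally show ?thesis .
  qed
  have chr0: "0 \<le> christoffel (mu_S S) d x"
    by (rule christoffel_ge) (auto intro!: integral_nonneg_AE)
  have "real (sdim p d) * christoffel (mu_S S) d x \<le> (2 * real d) ^ p * (X / E)"
    using chr e1 s_hi chr0 by (intro mult_mono) (auto simp: X_def E_def Dm_def)
  also have "\<dots> = (2 * real p) ^ p * (X * real d ^ p * (1 / real p) ^ p) / E"
    using p1 by (simp add: power_mult_distrib power_divide field_simps)
  also have "\<dots> < E * (X * real d ^ p * (1 / real p) ^ p) / E"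
    using big E0 X0 d by (intro divide_strict_right_mono mult_strict_right_mono) (auto simp: E_def p_def Dm_def)
  also have "\<dots> = X * real d ^ p * (1 / real p) ^ p" using E0 by simp
  also have "\<dots> \<le> 8 * X * real d ^ p * (1 / real p) ^ p" using X0 by simp
  also have "\<dots> \<le> alpha_thr p \<delta> (measure lborel S) d"
    unfolding X_def by (rule deg_cond_lower) (use dc p1 d \<delta> D0 in \<open>auto simp: p_def Dm_def\<close>)
  finally show ?thesis by (simp add: p_def)
qed

lemma deg_cond_dbig:
  assumes dc: "deg_cond p \<delta> D V d" and p: "p \<ge> 1" and d: "d \<ge> 1" and \<delta>: "\<delta> > 0" "\<delta> \<le> 1" and D: "D > 0"
    and V: "V > 0"
    and small: "\<delta> \<le> 8 * V * (1 / real p) ^ p / omega p * 2 powr (- (M / D))"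
  shows "M \<le> \<delta> * real d"
proof -
  define t where "t = \<delta> * real d / (\<delta> + D)"
  define K where "K = 8 * V * (1 / real p) ^ p / omega p"
  have w0: "omega p > 0" by (rule omega_pos)
  have K0: "K > 0" using V w0 p by (simp add: K_def)
  have "2 powr (3 - t) * 1 * (1 / real p) ^ p * 1 \<le> 2 powr (3 - t) * real d ^ p * (exp 1 / real p) ^ p * exp (real p ^ 2 / real d)"
    using d p by (intro mult_mono power_mono divide_right_mono) (auto simp: one_le_power)
  also have "\<dots> \<le> alpha_thr p \<delta> V d" using dc by (simp add: deg_cond_def t_def)
  also have "\<dots> \<le> \<delta> ^ p * omega p / V" by (rule alpha_le[OF \<delta>(1) V])
  also have "\<dots> \<le> \<delta> * omega p / V"
  proof -
    have "\<delta> ^ p \<le> \<delta> ^ 1" using \<delta> p by (intro power_decreasing) auto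
    then show ?thesis using w0 V by (intro divide_right_mono mult_right_mono) auto
  qed
  finally have A: "2 powr (3 - t) * (1 / real p) ^ p \<le> \<delta> * omega p / V" by simp
  have "2 powr (3 - t) = 8 * 2 powr (- t)" by (simp add: powr_diff powr_minus divide_inverse)
  then have "2 powr (- t) * K = (2 powr (3 - t) * (1 / real p) ^ p) * (V / omega p)"
    by (simp add: K_def)
  also have "\<dots> \<le> (\<delta> * omega p / V) * (V / omega p)"
    using A V w0 by (intro mult_right_mono) auto
  also have "\<dots> = \<delta>" using V w0 by simp
  finally have "2 powr (- t) * K \<le> \<delta>" .
  also have "\<delta> \<le> K * 2 powr (- (M / D))" using small by (simp add: K_def)
  finally have "2 powr (- t) \<le> 2 powr (- (M / D))" using K0 by (simp add: mult.commute)
  then have "M / D \<le> t" by simp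
  then have "M \<le> t * D" using D by (simp add: divide_le_eq)
  also have "t * D \<le> t * (\<delta> + D)" using \<delta> D by (intro mult_left_mono) (auto simp: t_def)
  also have "t * (\<delta> + D) = \<delta> * real d" using \<delta> D by (simp add: t_def)
  finally show ?thesis .
qed



lemma finite_min_pos:
  assumes "finite F" "\<And>z. z \<in> F \<Longrightarrow> (f z :: real) > 0"
  shows "\<exists>\<rho>>0. \<forall>z\<in>F. \<rho> \<le> f z"
proof -
  define \<rho> where "\<rho> = Min (insert 1 (f ` F))"
  have "\<rho> > 0" unfolding \<rho>_def using assms by (subst Min_gr_iff) auto
  moreover have "\<forall>z\<in>F. \<rho> \<le> f z" unfolding \<rho>_def using assms by auto
  ultimately show ?thesis by blast
qed

lemma H1:
  fixes S :: "'a::euclidean_space set"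
  assumes S: "compact S" "closure (interior S) = S" and e: "\<epsilon> > 0"
  shows "\<exists>\<rho>>0. \<forall>y\<in>S. \<exists>z. dist y z < \<epsilon> \<and> cball z \<rho> \<subseteq> S"
proof -
  have cov: "S \<subseteq> (\<Union>z\<in>interior S. ball z \<epsilon>)"
  proof
    fix y assume "y \<in> S"
    then have "y \<in> closure (interior S)" using S by simp
    then obtain z where "z \<in> interior S" "dist z y < \<epsilon>" using e closure_approachable by blast
    then show "y \<in> (\<Union>z\<in>interior S. ball z \<epsilon>)" by auto
  qed
  obtain F where F: "F \<subseteq> interior S" "finite F" "S \<subseteq> (\<Union>z\<in>F. ball z \<epsilon>)"
    by (rule compactE_image[OF S(1) _ cov]) auto
  have "\<forall>z\<in>F. \<exists>\<rho>. \<rho> > 0 \<and> cball z \<rho> \<subseteq> S" using F(1) mem_interior_cball by blast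
  from bchoice[OF this] obtain rf where rf: "\<forall>z\<in>F. rf z > 0 \<and> cball z (rf z) \<subseteq> S" by blast
  obtain \<rho> where \<rho>: "\<rho> > 0" "\<forall>z\<in>F. \<rho> \<le> rf z" using finite_min_pos[OF F(2), of rf] rf by blast
  have "\<forall>y\<in>S. \<exists>z. dist y z < \<epsilon> \<and> cball z \<rho> \<subseteq> S"
  proof
    fix y assume "y \<in> S"
    then obtain z where z: "z \<in> F" "y \<in> ball z \<epsilon>" using F(3) by blast
    have "cball z \<rho> \<subseteq> cball z (rf z)" using \<rho> z by auto
    then show "\<exists>z. dist y z < \<epsilon> \<and> cball z \<rho> \<subseteq> S" using rf z by (intro exI[of _ z]) (auto simp: dist_commute)
  qed
  then show ?thesis using \<rho> by blast
qed

lemma H2: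
  fixes S :: "'a::euclidean_space set"
  assumes S: "compact S" "closure (interior S) = S" and e: "\<epsilon> > 0"
  shows "\<exists>\<rho>>0. \<forall>y\<in>frontier S. \<exists>z w. dist y z < \<epsilon> \<and> dist y w < \<epsilon> \<and> cball z \<rho> \<subseteq> S \<and> cball w \<rho> \<inter> S = {}"
proof -
  have cl: "closed S" using S compact_imp_closed by blast
  have loc: "\<exists>t. dist y (fst t) < \<epsilon>/2 \<and> dist y (fst (snd t)) < \<epsilon>/2 \<and> snd (snd t) > 0 \<and> cball (fst t) (snd (snd t)) \<subseteq> S \<and> cball (fst (snd t)) (snd (snd t)) \<inter> S = {}"
    if y: "y \<in> frontier S" for y
  proof -
    have yS: "y \<in> S" using y cl by (simp add: frontier_def)
    then have "y \<in> closure (interior S)" using S by simp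
    then have "\<forall>\<epsilon>'>0. \<exists>z\<in>interior S. dist z y < \<epsilon>'" using closure_approachable[of y "interior S"] by blast
    from this[rule_format, of "\<epsilon>/2"] e obtain z where z: "z \<in> interior S" "dist z y < \<epsilon>/2" by auto
    obtain r1 where r1: "r1 > 0" "cball z r1 \<subseteq> S" using z(1) mem_interior_cball by blast
    have "y \<notin> interior S" using y by (simp add: frontier_def)
    then have "\<not> ball y (\<epsilon>/2) \<subseteq> S"
    proof (rule contrapos_nn)
      assume A: "ball y (\<epsilon>/2) \<subseteq> S"
      show "y \<in> interior S" unfolding mem_interior using e A by (intro exI[of _ "\<epsilon>/2"]) auto
    qed
    then obtain w where w0: "w \<in> ball y (\<epsilon>/2)" "w \<notin> S" by blast
    then have w: "w \<notin> S" "dist y w < \<epsilon>/2" by auto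
    have "open (- S)" using cl by auto
    then obtain r2 where r2: "r2 > 0" "cball w r2 \<subseteq> - S" using w(1) open_contains_cball by blast
    show ?thesis
    proof -
      have c1: "cball z (min r1 r2) \<subseteq> S" by (rule order_trans[OF subset_cball r1(2)]) simp
      have c2: "cball w (min r1 r2) \<inter> S = {}" using order_trans[OF subset_cball[of "min r1 r2" r2 w] r2(2)] by auto
      have "min r1 r2 > 0" using r1 r2 by simp
      then show ?thesis using c1 c2 z(2) w(2) by (intro exI[of _ "(z, w, min r1 r2)"]) (simp add: dist_commute)
    qed
  qed
  define Q where "Q y t \<longleftrightarrow> dist y (fst t) < \<epsilon>/2 \<and> dist y (fst (snd t)) < \<epsilon>/2 \<and> snd (snd t) > 0 \<and> cball (fst t) (snd (snd t)) \<subseteq> S \<and> cball (fst (snd t)) (snd (snd t)) \<inter> S = {}" for y and t :: "'a \<times> 'a \<times> real"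
  have "\<forall>y\<in>frontier S. \<exists>t. Q y t" unfolding Q_def by (rule ballI) (rule loc)
  from bchoice[OF this] obtain tf where tf: "\<forall>y\<in>frontier S. Q y (tf y)" by (elim exE)
  define zf where "zf y = fst (tf y)" for y
  define wf where "wf y = fst (snd (tf y))" for y
  define rf where "rf y = snd (snd (tf y))" for y
  have zwr: "dist y (zf y) < \<epsilon>/2 \<and> dist y (wf y) < \<epsilon>/2 \<and> rf y > 0 \<and>
      cball (zf y) (rf y) \<subseteq> S \<and> cball (wf y) (rf y) \<inter> S = {}" if "y \<in> frontier S" for y
    using tf that unfolding zf_def wf_def rf_def Q_def by simp
  have cf: "compact (frontier S)" using S(1) by (rule compact_frontier)
  have opn: "\<And>y. y \<in> frontier S \<Longrightarrow> open (ball y (\<epsilon>/2))" by simp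
  have cov: "frontier S \<subseteq> (\<Union>y\<in>frontier S. ball y (\<epsilon>/2))"
  proof
    fix y assume "y \<in> frontier S" then show "y \<in> (\<Union>y\<in>frontier S. ball y (\<epsilon>/2))" using e by (intro UN_I[of y]) auto
  qed
  obtain F where F: "F \<subseteq> frontier S" "finite F" "frontier S \<subseteq> (\<Union>y\<in>F. ball y (\<epsilon>/2))"
    by (rule compactE_image[OF cf opn cov])
  have rfp: "rf z > 0" if "z \<in> F" for z using zwr[of z] that F(1) by auto
  have "\<exists>\<rho>>0. \<forall>y\<in>F. \<rho> \<le> rf y" by (rule finite_min_pos[OF F(2)]) (rule rfp)
  then obtain \<rho> where \<rho>: "\<rho> > 0" "\<forall>y\<in>F. \<rho> \<le> rf y" by blast
  have "\<forall>y\<in>frontier S. \<exists>z w. dist y z < \<epsilon> \<and> dist y w < \<epsilon> \<and> cball z \<rho> \<subseteq> S \<and> cball w \<rho> \<inter> S = {}"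
  proof
    fix y' assume "y' \<in> frontier S"
    then obtain y where y: "y \<in> F" "y' \<in> ball y (\<epsilon>/2)" using F(3) by auto
    have yf: "y \<in> frontier S" using y F(1) by auto
    note Z = zwr[OF yf]
    have "dist y' (zf y) \<le> dist y' y + dist y (zf y)" by (rule dist_triangle)
    then have d1: "dist y' (zf y) < \<epsilon>" using y Z by (simp add: dist_commute)
    have "dist y' (wf y) \<le> dist y' y + dist y (wf y)" by (rule dist_triangle)
    then have d2: "dist y' (wf y) < \<epsilon>" using y Z by (simp add: dist_commute)
    have r: "\<rho> \<le> rf y" using \<rho> y by auto
    have c1: "cball (zf y) \<rho> \<subseteq> S" using order_trans[OF subset_cball[OF r]] Z by blast
    have c2: "cball (wf y) \<rho> \<inter> S = {}" using subset_cball[OF r, of "wf y"] Z by blast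
    show "\<exists>z w. dist y' z < \<epsilon> \<and> dist y' w < \<epsilon> \<and> cball z \<rho> \<subseteq> S \<and> cball w \<rho> \<inter> S = {}"
      using d1 d2 c1 c2 by (intro exI[of _ "zf y"] exI[of _ "wf y"] conjI)
  qed
  then show ?thesis using \<rho>(1) by (intro exI[of _ \<rho>] conjI)
qed

lemma boxc_cball: "boxc x a \<subseteq> cball x (real CARD('p) * a)" for x :: "real^'p::finite"
proof
  fix y assume y: "y \<in> boxc x a"
  have "dist x y = norm (x - y)" by (simp add: dist_norm)
  also have "\<dots> \<le> (\<Sum>i\<in>UNIV. \<bar>(x - y) $ i\<bar>)" by (rule norm_le_l1_cart)
  also have "\<dots> \<le> (\<Sum>i\<in>(UNIV::'p set). a)"
  proof (rule sum_mono)
    fix i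
    have "x $ i - a \<le> y $ i \<and> y $ i \<le> x $ i + a" using y by (simp add: mem_boxc)
    then show "\<bar>(x - y) $ i\<bar> \<le> a" by (simp add: abs_le_iff)
  qed
  finally show "y \<in> cball x (real CARD('p) * a)" by simp
qed

lemma hd_le:
  fixes X Y :: "'a::metric_space set"
  assumes "X \<noteq> {}" "Y \<noteq> {}" "\<forall>x\<in>X. \<exists>y\<in>Y. dist x y \<le> e" "\<forall>y\<in>Y. \<exists>x\<in>X. dist x y \<le> e"
  shows "hausdorff_dist X Y \<le> ereal e" "0 \<le> hausdorff_dist X Y"
proof -
  have A: "(SUP x\<in>X. INF y\<in>Y. ereal (dist x y)) \<le> ereal e"
  proof (rule SUP_least)
    fix x assume "x \<in> X"
    then obtain y where "y \<in> Y" "dist x y \<le> e" using assms by blast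
    then show "(INF y\<in>Y. ereal (dist x y)) \<le> ereal e" by (intro INF_lower2[of y]) auto
  qed
  have B: "(SUP y\<in>Y. INF x\<in>X. ereal (dist x y)) \<le> ereal e"
  proof (rule SUP_least)
    fix y assume "y \<in> Y"
    then obtain x where "x \<in> X" "dist x y \<le> e" using assms by blast
    then show "(INF x\<in>X. ereal (dist x y)) \<le> ereal e" by (intro INF_lower2[of x]) auto
  qed
  show "hausdorff_dist X Y \<le> ereal e" using A B by (simp add: hausdorff_dist_def)
  obtain x0 where x0: "x0 \<in> X" using assms by blast
  have "0 \<le> (INF y\<in>Y. ereal (dist x0 y))" by (rule INF_greatest) auto
  also have "\<dots> \<le> (SUP x\<in>X. INF y\<in>Y. ereal (dist x y))" by (rule SUP_upper[OF x0])
  finally show "0 \<le> hausdorff_dist X Y" by (simp add: hausdorff_dist_def le_max_iff_disj)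
qed



lemma seg_frontier:
  fixes a b :: "'a::euclidean_space"
  assumes "a \<in> A" "b \<notin> A"
  obtains y where "y \<in> closed_segment a b" "y \<in> frontier A"
proof -
  have "closed_segment a b \<inter> A \<noteq> {}" using assms by auto
  moreover have "closed_segment a b - A \<noteq> {}" using assms by auto
  ultimately have "closed_segment a b \<inter> frontier A \<noteq> {}"
    by (intro connected_Int_frontier) auto
  then show ?thesis using that by blast
qed

lemma hd_main:
  fixes S :: "(real^'p::finite) set"
  assumes S: "compact S" "closure (interior S) = S" "S \<noteq> {}" and e: "\<epsilon> > 0"
  shows "\<exists>a0>0. \<forall>T a r. 0 < a \<longrightarrow> a \<le> a0 \<longrightarrow> 0 < r \<longrightarrow> r \<le> a0 \<longrightarrow> (\<forall>x\<in>T. infdist x S < r) \<longrightarrow>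
     (\<forall>x. boxc x a \<subseteq> S \<longrightarrow> x \<in> T) \<longrightarrow>
     (hausdorff_dist T S \<le> ereal \<epsilon> \<and> 0 \<le> hausdorff_dist T S \<and>
      hausdorff_dist (frontier T) (frontier S) \<le> ereal \<epsilon> \<and> 0 \<le> hausdorff_dist (frontier T) (frontier S))"
proof -
  define p where "p = real CARD('p)"
  have p1: "p \<ge> 1" by (simp add: p_def Suc_le_eq)
  obtain \<rho>1 where \<rho>1: "\<rho>1 > 0" "\<forall>y\<in>S. \<exists>z. dist y z < \<epsilon> \<and> cball z \<rho>1 \<subseteq> S"
    using H1[OF S(1,2) e] by blast
  obtain \<rho>2 where \<rho>2: "\<rho>2 > 0" "\<forall>y\<in>frontier S. \<exists>z w. dist y z < \<epsilon> \<and> dist y w < \<epsilon> \<and> cball z \<rho>2 \<subseteq> S \<and> cball w \<rho>2 \<inter> S = {}"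
    using H2[OF S(1,2) e] by blast
  define m where "m = min \<epsilon> (min \<rho>1 \<rho>2)"
  have m0: "m > 0" using e \<rho>1 \<rho>2 by (simp add: m_def)
  define a0 where "a0 = m / (2 * p)"
  have a00: "a0 > 0" using m0 p1 by (simp add: a0_def)
  have a0m: "a0 \<le> m" using m0 p1 by (simp add: a0_def divide_le_eq)
  have cl: "closed S" using S(1) compact_imp_closed by blast
  have fS: "frontier S \<noteq> {}"
  proof
    assume "frontier S = {}"
    then have "S = UNIV" using S(3) frontier_eq_empty by blast
    then show False using compact_imp_bounded[OF S(1)] by simp
  qed
  have main: "hausdorff_dist T S \<le> ereal \<epsilon> \<and> 0 \<le> hausdorff_dist T S \<and>
      hausdorff_dist (frontier T) (frontier S) \<le> ereal \<epsilon> \<and> 0 \<le> hausdorff_dist (frontier T) (frontier S)"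
    if a: "0 < a" "a \<le> a0" and r: "0 < r" "r \<le> a0" and TS: "\<forall>x\<in>T. infdist x S < r"
      and ST: "\<forall>x. boxc x a \<subseteq> S \<longrightarrow> x \<in> T" for T a r
  proof -
    have pa: "p * a \<le> m / 2" using a p1 by (simp add: a0_def field_simps)
    have pa1: "p * a \<le> \<rho>1" "p * a \<le> \<rho>2" "2 * (p * a) \<le> \<epsilon>" using pa m0 by (auto simp: m_def)
    have r1: "r \<le> \<epsilon>" "r \<le> \<rho>2" using r a0m by (auto simp: m_def)
    have pa0: "p * a > 0" using a p1 by simp
    have inT: "z \<in> T" if "cball z \<rho> \<subseteq> S" "p * a \<le> \<rho>" for z \<rho>
    proof -
      have "boxc z a \<subseteq> cball z (p * a)" unfolding p_def by (rule boxc_cball)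
      also have "\<dots> \<subseteq> cball z \<rho>" using that(2) by (rule subset_cball)
      finally show ?thesis using that(1) ST by blast
    qed
    have nearS: "\<exists>y\<in>S. dist x y \<le> r" if "x \<in> T" for x
    proof -
      obtain y where "y \<in> S" "infdist x S = dist x y" using infdist_attains_inf[OF cl S(3)] by blast
      then show ?thesis using TS that by (intro bexI[of _ y]) auto
    qed
    have Tne: "T \<noteq> {}"
    proof -
      obtain y where "y \<in> S" using S(3) by blast
      then obtain z where "cball z \<rho>1 \<subseteq> S" using \<rho>1 by blast
      then show ?thesis using inT pa1 by blast
    qed
    have P1: "hausdorff_dist T S \<le> ereal \<epsilon> \<and> 0 \<le> hausdorff_dist T S"
    proof -
      have A: "\<forall>x\<in>T. \<exists>y\<in>S. dist x y \<le> \<epsilon>" using nearS r1 by (meson order_trans)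
      have B: "\<forall>y\<in>S. \<exists>x\<in>T. dist x y \<le> \<epsilon>"
      proof
        fix y assume "y \<in> S"
        then obtain z where z: "dist y z < \<epsilon>" "cball z \<rho>1 \<subseteq> S" using \<rho>1 by blast
        then have "z \<in> T" using inT pa1 by blast
        then show "\<exists>x\<in>T. dist x y \<le> \<epsilon>" using z by (intro bexI[of _ z]) (auto simp: dist_commute)
      qed
      show ?thesis using hd_le[OF Tne S(3) A B] by blast
    qed
    have B2: "\<forall>y\<in>frontier S. \<exists>x\<in>frontier T. dist x y \<le> \<epsilon>"
    proof
      fix y assume y: "y \<in> frontier S"
      then obtain z w where zw: "dist y z < \<epsilon>" "dist y w < \<epsilon>" "cball z \<rho>2 \<subseteq> S" "cball w \<rho>2 \<inter> S = {}"
        using \<rho>2 by blast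
      have zT: "z \<in> T" using inT zw(3) pa1 by blast
      have wT: "w \<notin> T"
      proof
        assume "w \<in> T"
        then obtain s where s: "s \<in> S" "dist w s \<le> r" using nearS by blast
        then have "s \<in> cball w \<rho>2" using r1 by auto
        then show False using s zw(4) by blast
      qed
      obtain x where x: "x \<in> closed_segment z w" "x \<in> frontier T" by (rule seg_frontier[OF zT wT])
      have "closed_segment z w \<subseteq> ball y \<epsilon>" using zw by (intro closed_segment_subset) auto
      then have "dist y x < \<epsilon>" using x by auto
      then show "\<exists>x\<in>frontier T. dist x y \<le> \<epsilon>" using x by (intro bexI[of _ x]) (auto simp: dist_commute)
    qed
    have fT: "frontier T \<noteq> {}" using B2 fS by blast
    have A2: "\<forall>x\<in>frontier T. \<exists>y\<in>frontier S. dist x y \<le> \<epsilon>"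
    proof
      fix x assume x: "x \<in> frontier T"
      have clT: "closure T \<subseteq> {x. infdist x S \<le> r}"
      proof (rule closure_minimal)
        show "T \<subseteq> {x. infdist x S \<le> r}" using TS by (auto intro: less_imp_le)
        show "closed {x. infdist x S \<le> r}"
          by (intro closed_Collect_le continuous_intros)
      qed
      have xr: "infdist x S \<le> r" using x clT by (auto simp: frontier_def)
      have "\<exists>w. w \<notin> S \<and> dist x w \<le> 2 * (p * a)"
      proof (rule ccontr)
        assume "\<not> (\<exists>w. w \<notin> S \<and> dist x w \<le> 2 * (p * a))"
        then have cb: "cball x (2 * (p * a)) \<subseteq> S" by (auto simp: subset_eq)
        have "ball x (p * a) \<subseteq> T"
        proof
          fix x' assume x': "x' \<in> ball x (p * a)"
          have "cball x' (p * a) \<subseteq> cball x (2 * (p * a))"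
          proof
            fix y assume "y \<in> cball x' (p * a)"
            then have "dist x y \<le> dist x x' + dist x' y" "dist x x' < p * a" "dist x' y \<le> p * a"
              using x' dist_triangle by auto
            then show "y \<in> cball x (2 * (p * a))" by simp
          qed
          then have "cball x' (p * a) \<subseteq> S" using cb by blast
          then show "x' \<in> T" using inT by blast
        qed
        then have "x \<in> interior T" using pa0 unfolding mem_interior by blast
        then show False using x by (simp add: frontier_def)
      qed
      then obtain w where w: "w \<notin> S" "dist x w \<le> 2 * (p * a)" by blast
      show "\<exists>y\<in>frontier S. dist x y \<le> \<epsilon>"
      proof (cases "x \<in> S")
        case True
        obtain y where y: "y \<in> closed_segment x w" "y \<in> frontier S" by (rule seg_frontier[OF True w(1)])
        have "dist y x \<le> dist x w" using dist_in_closed_segment[OF y(1)] by blast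
        then show ?thesis using y w pa1 by (intro bexI[of _ y]) (auto simp: dist_commute)
      next
        case False
        obtain s where s: "s \<in> S" "infdist x S = dist x s" using infdist_attains_inf[OF cl S(3)] by blast
        obtain y where y: "y \<in> closed_segment s x" "y \<in> frontier S" by (rule seg_frontier[OF s(1) False])
        have "dist y x \<le> dist s x" using dist_in_closed_segment[OF y(1)] by blast
        then show ?thesis using y s xr r1 by (intro bexI[of _ y]) (auto simp: dist_commute)
      qed
    qed
    show ?thesis using P1 hd_le[OF fT fS A2 B2] by blast
  qed
  show ?thesis using a00 main by blast
qed



lemma ereal_tendsto0I:
  fixes f :: "nat \<Rightarrow> ereal"
  assumes "\<And>\<epsilon>. \<epsilon> > 0 \<Longrightarrow> eventually (\<lambda>k. 0 \<le> f k \<and> f k \<le> ereal \<epsilon>) sequentially"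
  shows "f \<longlonglongrightarrow> 0"
proof (rule order_tendstoI)
  fix a :: ereal assume "a < 0"
  have "eventually (\<lambda>k. 0 \<le> f k \<and> f k \<le> ereal 1) sequentially" by (rule assms) simp
  then show "eventually (\<lambda>k. a < f k) sequentially"
    by eventually_elim (use \<open>a < 0\<close> in auto)
next
  fix a :: ereal assume a: "0 < a"
  obtain \<epsilon> where \<epsilon>: "\<epsilon> > 0" "ereal \<epsilon> < a"
  proof (cases a)
    case (real r) then show ?thesis using that[of "r/2"] a by auto
  next
    case PInf then show ?thesis using that[of 1] by auto
  next
    case MInf then show ?thesis using a by auto
  qed
  have "eventually (\<lambda>k. 0 \<le> f k \<and> f k \<le> ereal \<epsilon>) sequentially" by (rule assms[OF \<epsilon>(1)])
  then show "eventually (\<lambda>k. f k < a) sequentially"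
    by eventually_elim (use \<epsilon> in auto)
qed

lemma ev_small:
  fixes \<delta> :: "nat \<Rightarrow> real"
  assumes "\<delta> \<longlonglongrightarrow> 0" "c > 0"
  shows "eventually (\<lambda>k. \<delta> k \<le> c) sequentially"
  using order_tendstoD(2)[OF assms(1) assms(2)] by eventually_elim auto

theorem theorem3p8:
  fixes S :: "(real^'p::finite) set"
    and \<delta> :: "nat \<Rightarrow> real"
    and d :: "nat \<Rightarrow> nat"
  assumes "compact S" and "closure (interior S) = S" and "S \<noteq> {}"
    and "decseq \<delta>" and "\<And>k. \<delta> k > 0" and "\<delta> \<longlonglongrightarrow> 0"
    and "\<And>k. d k > 0 \<and> deg_cond CARD('p) (\<delta> k) (diameter S) (measure lborel S) (d k)"
    and "\<And>k m. m > 0 \<Longrightarrow> deg_cond CARD('p) (\<delta> k) (diameter S) (measure lborel S) m \<Longrightarrow> d k \<le> m"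
  defines "Sk \<equiv> \<lambda>k. {x. real (sdim CARD('p) (d k)) * christoffel (mu_S S) (d k) x
                        \<ge> alpha_thr CARD('p) (\<delta> k) (measure lborel S) (d k)}"
  shows "(\<lambda>k. hausdorff_dist (Sk k) S) \<longlonglongrightarrow> 0 \<and>
         (\<lambda>k. hausdorff_dist (frontier (Sk k)) (frontier S)) \<longlonglongrightarrow> 0"
proof -
  note S = assms(1,2,3)
  note \<delta>pos = assms(5)
  note \<delta>0 = assms(6)
  define p where "p = CARD('p)"
  define V where "V = measure lborel S"
  define D where "D = diameter S"
  define w where "w = omega p"
  have p1: "p \<ge> 1" by (simp add: p_def Suc_le_eq)
  have d1: "d k \<ge> 1" for k using assms(7)[of k] by simp
  have dc: "deg_cond p (\<delta> k) D V (d k)" for k using assms(7)[of k] by (simp add: p_def D_def V_def)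
  have intne: "interior S \<noteq> {}" using S by auto
  then obtain z0 where z0: "z0 \<in> interior S" by blast
  then obtain \<rho>0 where \<rho>0: "\<rho>0 > 0" "cball z0 \<rho>0 \<subseteq> S" using mem_interior_cball by blast
  have V0: "V > 0"
  proof -
    have "0 < measure lborel (ball z0 \<rho>0)" using content_ball_pos[OF \<rho>0(1)] by simp
    also have "\<dots> \<le> V" unfolding V_def
      using \<rho>0(2) by (intro measure_mono_fmeasurable fmeasurable_compact S(1)) auto
    finally show ?thesis .
  qed
  have D0: "D > 0"
  proof -
    define b :: "real^'p" where "b = (SOME i. i \<in> Basis)"
    have b: "b \<in> Basis" unfolding b_def by (rule SOME_Basis)
    have "z0 + \<rho>0 *\<^sub>R b \<in> cball z0 \<rho>0" using b \<rho>0 by (simp add: dist_norm)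
    then have "dist z0 (z0 + \<rho>0 *\<^sub>R b) \<le> D" unfolding D_def
      using \<rho>0 by (intro diameter_bounded_bound[OF compact_imp_bounded[OF S(1)]]) auto
    moreover have "dist z0 (z0 + \<rho>0 *\<^sub>R b) = \<rho>0" using b \<rho>0 by (simp add: dist_norm)
    ultimately show ?thesis using \<rho>0 by simp
  qed
  define r where "r k = sqrt (5 * D * \<delta> k)" for k
  define a where "a k = 2 * real p * (w + 1) * \<delta> k" for k
  have w0: "w > 0" by (simp add: w_def omega_pos)
  have a0: "a k > 0" for k using p1 w0 \<delta>pos[of k] by (simp add: a_def)
  have r0: "r k > 0" for k using D0 \<delta>pos[of k] by (simp add: r_def)
  have inSk: "x \<in> Sk k" if "boxc x (a k) \<subseteq> S" for x k
    unfolding Sk_def using in_Sk[OF S(1) _ \<delta>pos[of k], of x "d k"] V0 that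
    by (simp add: a_def p_def w_def V_def)
  define M where "M = D * (2 * real p) ^ p + 2"
  define K where "K = 8 * V * (1 / real p) ^ p / w * 2 powr (- (M / D))"
  have K0: "K > 0" using V0 w0 p1 by (simp add: K_def)
  have ev1: "eventually (\<lambda>k. \<delta> k \<le> min 1 (min (D / 5) K)) sequentially"
    by (rule ev_small[OF \<delta>0]) (use D0 K0 in auto)
  have outSk: "eventually (\<lambda>k. \<forall>x\<in>Sk k. infdist x S < r k) sequentially"
    using ev1
  proof eventually_elim
    case (elim k)
    have dbig: "M \<le> \<delta> k * real (d k)"
      by (rule deg_cond_dbig[OF dc p1 d1 \<delta>pos]) (use elim D0 V0 in \<open>auto simp: K_def w_def\<close>)
    have big: "(2 * real p) ^ p < exp ((real (d k) - 2) * \<delta> k / D)"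
    proof -
      have "(2 * real p) ^ p \<le> (real (d k) - 2) * \<delta> k / D"
        using dbig elim D0 by (simp add: M_def field_simps)
      also have "\<dots> < 1 + (real (d k) - 2) * \<delta> k / D" by simp
      also have "\<dots> \<le> exp ((real (d k) - 2) * \<delta> k / D)" by (rule exp_ge_add_one_self)
      finally show ?thesis .
    qed
    have rD: "r k \<le> D"
    proof -
      have "5 * D * \<delta> k \<le> D * D" using elim D0 by (simp add: field_simps)
      then have "r k \<le> sqrt (D * D)" unfolding r_def by (rule real_sqrt_le_mono)
      then show ?thesis using D0 by simp
    qed
    show ?case
    proof
      fix x assume x: "x \<in> Sk k"
      show "infdist x S < r k"
      proof (rule ccontr)
        assume "\<not> infdist x S < r k"
        then have "r k \<le> infdist x S" by simp
        then have "real (sdim CARD('p) (d k)) * christoffel (mu_S S) (d k) x < alpha_thr CARD('p) (\<delta> k) (measure lborel S) (d k)"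
          using out_Sk[OF S(1) S(3) _ \<delta>pos[of k], of "d k" x] V0 D0 rD d1[of k] dc[of k] big
          by (simp add: r_def p_def D_def V_def)
        then show False using x by (simp add: Sk_def)
      qed
    qed
  qed
  have conv: "eventually (\<lambda>k. hausdorff_dist (Sk k) S \<le> ereal \<epsilon> \<and> 0 \<le> hausdorff_dist (Sk k) S \<and>
      hausdorff_dist (frontier (Sk k)) (frontier S) \<le> ereal \<epsilon> \<and> 0 \<le> hausdorff_dist (frontier (Sk k)) (frontier S)) sequentially"
    if e: "\<epsilon> > 0" for \<epsilon>
  proof -
    obtain a00 where a00: "a00 > 0" and H: "\<forall>T a r. 0 < a \<longrightarrow> a \<le> a00 \<longrightarrow> 0 < r \<longrightarrow> r \<le> a00 \<longrightarrow> (\<forall>x\<in>T. infdist x S < r) \<longrightarrow>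
     (\<forall>x. boxc x a \<subseteq> S \<longrightarrow> x \<in> T) \<longrightarrow>
     (hausdorff_dist T S \<le> ereal \<epsilon> \<and> 0 \<le> hausdorff_dist T S \<and>
      hausdorff_dist (frontier T) (frontier S) \<le> ereal \<epsilon> \<and> 0 \<le> hausdorff_dist (frontier T) (frontier S))"
      using hd_main[OF S e] by blast
    have c1: "a00 / (2 * real p * (w + 1)) > 0" using a00 p1 w0 by simp
    have c2: "a00\<^sup>2 / (5 * D) > 0" using a00 D0 by simp
    have ev2: "eventually (\<lambda>k. \<delta> k \<le> min (a00 / (2 * real p * (w + 1))) (a00\<^sup>2 / (5 * D))) sequentially"
      by (rule ev_small[OF \<delta>0]) (use c1 c2 in auto)
    show ?thesis using ev2 outSk
    proof eventually_elim
      case (elim k)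
      have pc: "0 < 2 * real p * (w + 1)" using p1 w0 by simp
      have "\<delta> k \<le> a00 / (2 * real p * (w + 1))" using elim by simp
      then have "\<delta> k * (2 * real p * (w + 1)) \<le> a00" using pos_le_divide_eq[OF pc] by simp
      then have ak: "a k \<le> a00" by (simp add: a_def mult.commute)
      have rk: "r k \<le> a00"
      proof -
        have "5 * D * \<delta> k \<le> a00\<^sup>2" using elim D0 by (simp add: field_simps)
        then have "r k \<le> sqrt (a00\<^sup>2)" unfolding r_def by (rule real_sqrt_le_mono)
        then show ?thesis using a00 by simp
      qed
      show ?case using H a0[of k] ak r0[of k] rk elim(2) inSk by blast
    qed
  qed
  show ?thesis
  proof
    show "(\<lambda>k. hausdorff_dist (Sk k) S) \<longlonglongrightarrow> 0"
    proof (rule ereal_tendsto0I)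
      fix \<epsilon> :: real assume "\<epsilon> > 0"
      from conv[OF this] show "eventually (\<lambda>k. 0 \<le> hausdorff_dist (Sk k) S \<and> hausdorff_dist (Sk k) S \<le> ereal \<epsilon>) sequentially"
        by (rule eventually_mono) auto
    qed
    show "(\<lambda>k. hausdorff_dist (frontier (Sk k)) (frontier S)) \<longlonglongrightarrow> 0"
    proof (rule ereal_tendsto0I)
      fix \<epsilon> :: real assume "\<epsilon> > 0"
      from conv[OF this] show "eventually (\<lambda>k. 0 \<le> hausdorff_dist (frontier (Sk k)) (frontier S) \<and> hausdorff_dist (frontier (Sk k)) (frontier S) \<le> ereal \<epsilon>) sequentially"
        by (rule eventually_mono) auto
    qed
  qed
qed

end
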